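(* Let $X$ be an FK-space containing $\phi$ and let $\overline{\phi}$ be the closure of $\phi$ in $X$. The following are equivalent: (i) $D_p^qW$ is closed in $X$; (ii) $\overline{\phi}\subseteq D_p^qB$; (iii) $\overline{\phi}\subseteq D_p^qF$; (iv) $\overline{\phi}=D_p^qW$; (v) $\overline{\phi}=D_p^qS$; (vi) $D_p^qS$ is closed in $X$.
   Context: An FK-space is a vector subspace of the space $w$ of all complex sequences with a complete metrizable locally convex topology in which coordinate functionals are continuous; $X'$ is its continuous dual. $\delta^j$ has $1$ in position $j$, $0$ elsewhere; $\phi=\operatorname{span}\{\delta^j\}$. $p(n)<q(n)$ are nonnegative integer sequences with $q(n)\to\infty$. For $x\in w$, $x^{(k)}=\sum_{j=1}^kx_j\delta^j$ and $T_n(x)=\frac{1}{q(n)-p(n)}\sum_{k=p(n)+1}^{q(n)}x^{(k)}$. Subspaces of $X$: $D_p^qS=\{x\in X: T_n(x)\to x\text{ in }X\}$; $D_p^qW=\{x\in X: f(T_n(x))\to f(x)\ \forall f\in X'\}$; $D_p^qF=\{x\in X:\lim_n f(T_n(x))\text{ exists }\forall f\in X'\}$; $D_p^qB=\{x\in X:\sup_n|f(T_n(x))|<\infty\ \forall f\in X'\}$. *)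

theory Defs
  imports "HOL-Analysis.Analysis"
begin

type_synonym cseq = "nat \<Rightarrow> complex"

text \<open>Coordinates are indexed from 0 (x 0 is the paper's x_1).\<close>

definition seq_add :: "cseq \<Rightarrow> cseq \<Rightarrow> cseq" where
  "seq_add x y = (\<lambda>j. x j + y j)"

definition seq_diff :: "cseq \<Rightarrow> cseq \<Rightarrow> cseq" where
  "seq_diff x y = (\<lambda>j. x j - y j)"

definition seq_scale :: "complex \<Rightarrow> cseq \<Rightarrow> cseq" where
  "seq_scale c x = (\<lambda>j. c * x j)"

definition seq_zero :: cseq where
  "seq_zero = (\<lambda>j. 0)"

definition cvec_subspace :: "cseq set \<Rightarrow> bool" where
  "cvec_subspace X \<longleftrightarrow> seq_zero \<in> X \<and>
     (\<forall>x\<in>X. \<forall>y\<in>X. seq_add x y \<in> X) \<and> (\<forall>c. \<forall>x\<in>X. seq_scale c x \<in> X)"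

definition seq_convex :: "cseq set \<Rightarrow> bool" where
  "seq_convex V \<longleftrightarrow> (\<forall>a\<in>V. \<forall>b\<in>V. \<forall>t::real. 0 \<le> t \<and> t \<le> 1 \<longrightarrow>
      seq_add (seq_scale (complex_of_real t) a) (seq_scale (complex_of_real (1 - t)) b) \<in> V)"

definition fk_space :: "cseq set \<Rightarrow> cseq topology \<Rightarrow> bool" where
  "fk_space X T \<longleftrightarrow>
     cvec_subspace X \<and> topspace T = X \<and>
     continuous_map (prod_topology T T) T (\<lambda>(x, y). seq_add x y) \<and>
     continuous_map (prod_topology euclidean T) T (\<lambda>(c, x). seq_scale c x) \<and>
     (\<forall>x U. openin T U \<and> x \<in> U \<longrightarrow> (\<exists>V. openin T V \<and> x \<in> V \<and> V \<subseteq> U \<and> seq_convex V)) \<and>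
     metrizable_space T \<and>
     (\<forall>s. (\<forall>n. s n \<in> X) \<and>
          (\<forall>U. openin T U \<and> seq_zero \<in> U \<longrightarrow>
              (\<exists>N. \<forall>m n. N \<le> m \<and> N \<le> n \<longrightarrow> seq_diff (s m) (s n) \<in> U))
        \<longrightarrow> (\<exists>l\<in>X. limitin T s l sequentially)) \<and>
     (\<forall>j. continuous_map T euclidean (\<lambda>x. x j))"

definition cdual :: "cseq set \<Rightarrow> cseq topology \<Rightarrow> (cseq \<Rightarrow> complex) set" where
  "cdual X T = {f. (\<forall>x\<in>X. \<forall>y\<in>X. f (seq_add x y) = f x + f y) \<and>
                  (\<forall>c. \<forall>x\<in>X. f (seq_scale c x) = c * f x) \<and>
                  continuous_map T euclidean f}"

definition delta :: "nat \<Rightarrow> cseq" where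
  "delta j = (\<lambda>i. if i = j then 1 else 0)"

definition phi :: "cseq set" where
  "phi = {x. \<exists>F c. finite F \<and> x = (\<lambda>i. \<Sum>j\<in>F. c j * delta j i)}"

definition sect :: "nat \<Rightarrow> cseq \<Rightarrow> cseq" where
  "sect k x = (\<lambda>i. \<Sum>j<k. x j * delta j i)"

definition Tmean :: "(nat \<Rightarrow> nat) \<Rightarrow> (nat \<Rightarrow> nat) \<Rightarrow> nat \<Rightarrow> cseq \<Rightarrow> cseq" where
  "Tmean p q n x = (\<lambda>i. (\<Sum>k\<in>{p n<..q n}. sect k x i) / of_nat (q n - p n))"

definition DS :: "(nat \<Rightarrow> nat) \<Rightarrow> (nat \<Rightarrow> nat) \<Rightarrow> cseq set \<Rightarrow> cseq topology \<Rightarrow> cseq set" where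
  "DS p q X T = {x\<in>X. limitin T (\<lambda>n. Tmean p q n x) x sequentially}"

definition DW :: "(nat \<Rightarrow> nat) \<Rightarrow> (nat \<Rightarrow> nat) \<Rightarrow> cseq set \<Rightarrow> cseq topology \<Rightarrow> cseq set" where
  "DW p q X T = {x\<in>X. \<forall>f\<in>cdual X T. (\<lambda>n. f (Tmean p q n x)) \<longlonglongrightarrow> f x}"

definition DF :: "(nat \<Rightarrow> nat) \<Rightarrow> (nat \<Rightarrow> nat) \<Rightarrow> cseq set \<Rightarrow> cseq topology \<Rightarrow> cseq set" where
  "DF p q X T = {x\<in>X. \<forall>f\<in>cdual X T. convergent (\<lambda>n. f (Tmean p q n x))}"

definition DB :: "(nat \<Rightarrow> nat) \<Rightarrow> (nat \<Rightarrow> nat) \<Rightarrow> cseq set \<Rightarrow> cseq topology \<Rightarrow> cseq set" where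
  "DB p q X T = {x\<in>X. \<forall>f\<in>cdual X T. (\<exists>M. \<forall>n. norm (f (Tmean p q n x)) \<le> M)}"

end

theory Submission
  imports Defs "HOL-Library.Function_Algebras"
begin
lemma seq_add_eq[simp]: "seq_add x y = x + y" by (simp add: seq_add_def fun_eq_iff)
lemma seq_diff_eq[simp]: "seq_diff x y = x - y" by (simp add: seq_diff_def fun_eq_iff)
lemma seq_zero_eq[simp]: "seq_zero = 0" by (simp add: seq_zero_def fun_eq_iff)

lemma scale_add: "seq_scale c (x + y) = seq_scale c x + seq_scale c y"
  by (simp add: seq_scale_def fun_eq_iff algebra_simps)
lemma scale_diff: "seq_scale c (x - y) = seq_scale c x - seq_scale c y"
  by (simp add: seq_scale_def fun_eq_iff algebra_simps)
lemma scale_minus: "seq_scale c (- x) = - seq_scale c x"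
  by (simp add: seq_scale_def fun_eq_iff algebra_simps)
lemma scale_add2: "seq_scale (a + b) x = seq_scale a x + seq_scale b x"
  by (simp add: seq_scale_def fun_eq_iff algebra_simps)
lemma scale_diff2: "seq_scale (a - b) x = seq_scale a x - seq_scale b x"
  by (simp add: seq_scale_def fun_eq_iff algebra_simps)
lemma scale_scale[simp]: "seq_scale a (seq_scale b x) = seq_scale (a * b) x"
  by (simp add: seq_scale_def fun_eq_iff algebra_simps)
lemma scale_one[simp]: "seq_scale 1 x = x"
  by (simp add: seq_scale_def fun_eq_iff)
lemma scale_zero[simp]: "seq_scale 0 x = 0"
  by (simp add: seq_scale_def fun_eq_iff)
lemma scale_0[simp]: "seq_scale c 0 = 0"
  by (simp add: seq_scale_def fun_eq_iff)
lemma scale_m1: "seq_scale (-1) x = - x"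
  by (simp add: seq_scale_def fun_eq_iff)
lemma scale_apply: "seq_scale c x i = c * x i"
  by (simp add: seq_scale_def)

lemma subspace_facts:
  assumes "cvec_subspace X"
  shows "0 \<in> X" "\<And>x y. x \<in> X \<Longrightarrow> y \<in> X \<Longrightarrow> x + y \<in> X"
    "\<And>c x. x \<in> X \<Longrightarrow> seq_scale c x \<in> X"
    "\<And>x. x \<in> X \<Longrightarrow> - x \<in> X"
    "\<And>x y. x \<in> X \<Longrightarrow> y \<in> X \<Longrightarrow> x - y \<in> X"
proof -
  have "seq_zero \<in> X" using assms by (simp only: cvec_subspace_def)
  moreover have "seq_zero = (0::cseq)" by (simp add: seq_zero_def zero_fun_def)
  ultimately show "0 \<in> X" by metis
  show A: "\<And>x y. x \<in> X \<Longrightarrow> y \<in> X \<Longrightarrow> x + y \<in> X" using assms by (simp add: cvec_subspace_def)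
  show S: "\<And>c x. x \<in> X \<Longrightarrow> seq_scale c x \<in> X" using assms by (simp add: cvec_subspace_def)
  show N: "\<And>x. x \<in> X \<Longrightarrow> - x \<in> X" using S[of _ "-1"] by (simp add: scale_m1)
  show "\<And>x y. x \<in> X \<Longrightarrow> y \<in> X \<Longrightarrow> x - y \<in> X" using A N by (metis diff_conv_add_uminus)
qed

lemma subspace_sum:
  assumes "cvec_subspace X" "finite F" "\<And>i. i \<in> F \<Longrightarrow> f i \<in> X"
  shows "sum f F \<in> X"
  using assms(2,3)
proof (induction F rule: finite_induct)
  case empty then show ?case using subspace_facts(1)[OF assms(1)] by (metis sum.empty)
next
  case (insert a F)
  then have "f a \<in> X" "sum f F \<in> X" by auto
  then have "f a + sum f F \<in> X" using subspace_facts(2)[OF assms(1)] by blast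
  then show ?case using insert(1,2) sum.insert[of F a f] by metis
qed

locale fks =
  fixes X :: "cseq set" and T :: "cseq topology"
  assumes fk: "fk_space X T"
begin

lemma sub: "cvec_subspace X" using fk by (simp add: fk_space_def)
lemma top: "topspace T = X" using fk by (simp add: fk_space_def)
lemma addc: "continuous_map (prod_topology T T) T (\<lambda>(x, y). x + y)"
  using fk by (simp add: fk_space_def)
lemma scalec: "continuous_map (prod_topology euclidean T) T (\<lambda>(c, x). seq_scale c x)"
  using fk by (simp add: fk_space_def)
lemma lconv: "openin T U \<Longrightarrow> x \<in> U \<Longrightarrow> \<exists>V. openin T V \<and> x \<in> V \<and> V \<subseteq> U \<and> seq_convex V"
  using fk by (simp add: fk_space_def)
lemma metr: "metrizable_space T" using fk by (simp add: fk_space_def)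
lemma compl: "(\<forall>n. s n \<in> X) \<Longrightarrow>
          (\<forall>U. openin T U \<and> 0 \<in> U \<longrightarrow>
              (\<exists>N. \<forall>m n. N \<le> m \<and> N \<le> n \<longrightarrow> s m - s n \<in> U))
        \<Longrightarrow> (\<exists>l\<in>X. limitin T s l sequentially)"
  using fk by (simp add: fk_space_def)
lemma coordc: "continuous_map T euclidean (\<lambda>x. x j)"
  using fk by (simp add: fk_space_def)

lemmas X0 = subspace_facts(1)[OF sub]
lemmas Xadd = subspace_facts(2)[OF sub]
lemmas Xscale = subspace_facts(3)[OF sub]
lemmas Xneg = subspace_facts(4)[OF sub]
lemmas Xdiff = subspace_facts(5)[OF sub]

lemma transl_cont: assumes "a \<in> X" shows "continuous_map T T (\<lambda>z. z + a)"
proof -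
  have "continuous_map T (prod_topology T T) (\<lambda>z. (z, a))"
    using assms by (simp add: continuous_map_pairwise o_def top)
  from continuous_map_compose[OF this addc] show ?thesis by (simp add: o_def)
qed

lemma scale_cont: "continuous_map T T (seq_scale c)"
proof -
  have "continuous_map T (prod_topology euclidean T) (\<lambda>z. (c, z))"
    by (simp add: continuous_map_pairwise o_def)
  from continuous_map_compose[OF this scalec] show ?thesis by (simp add: o_def)
qed

lemma scale_cont2: assumes "x \<in> X" shows "continuous_map euclidean T (\<lambda>c. seq_scale c x)"
proof -
  have "continuous_map euclidean (prod_topology euclidean T) (\<lambda>c. (c, x))"
    using assms by (simp add: continuous_map_pairwise o_def top)
  from continuous_map_compose[OF this scalec] show ?thesis by (simp add: o_def)
qed

lemma open_transl: assumes "openin T U" "a \<in> X" shows "openin T {z\<in>X. z + a \<in> U}"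
  using openin_continuous_map_preimage[OF transl_cont[OF assms(2)] assms(1)] by (simp add: top)

lemma open_scale: assumes "openin T U" shows "openin T {z\<in>X. seq_scale c z \<in> U}"
  using openin_continuous_map_preimage[OF scale_cont assms(1)] by (simp add: top)

lemma base0: "\<exists>B::nat \<Rightarrow> cseq set. (\<forall>k. openin T (B k) \<and> 0 \<in> B k) \<and>
   (\<forall>U. openin T U \<and> 0 \<in> U \<longrightarrow> (\<exists>k. B k \<subseteq> U))"
proof -
  obtain M d where md: "Metric_space M d" and TT: "T = Metric_space.mtopology M d"
    using metr by (auto simp: metrizable_space_def)
  interpret Metric_space M d by (rule md)
  have MX: "M = X" using top TT by simp
  define B where "B k = mball 0 (1 / (real k + 1))" for k
  have "openin T (B k) \<and> 0 \<in> B k" for k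
  proof -
    have "0 \<in> M" using MX X0 by simp
    then show ?thesis using TT by (simp add: B_def openin_mball)
  qed
  moreover have "\<exists>k. B k \<subseteq> U" if UU: "openin T U" "0 \<in> U" for U
  proof -
    obtain r where r: "r > 0" "mball 0 r \<subseteq> U" using UU unfolding TT openin_mtopology by blast
    obtain k::nat where "k > 0" "inverse (real k) < r" using ex_inverse_of_nat_less r(1) by blast
    moreover have "1 / (real k + 1) \<le> inverse (real k)" using \<open>k > 0\<close> by (simp add: divide_simps)
    ultimately have k: "1 / (real k + 1) < r" by linarith
    then have "B k \<subseteq> mball 0 r" unfolding B_def by (intro mball_subset_concentric) simp
    then show ?thesis using r by blast
  qed
  ultimately show ?thesis by blast
qed

end

definition mink :: "cseq set \<Rightarrow> cseq \<Rightarrow> real" where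
  "mink A x = Inf {t. 0 < t \<and> (\<exists>a\<in>A. x = seq_scale (complex_of_real t) a)}"

lemma le_eps_mult:
  fixes a b k :: real
  assumes "k > 0" "\<And>e. e > 0 \<Longrightarrow> a \<le> b + k * e"
  shows "a \<le> b"
proof (rule field_le_epsilon)
  fix e :: real assume "e > 0"
  then have "a \<le> b + k * (e / k)" using assms(1) assms(2)[of "e/k"] by simp
  then show "a \<le> b + e" using assms(1) by simp
qed

lemma mink_props:
  assumes sub: "cvec_subspace X"
    and bal: "\<And>c a. cmod c \<le> 1 \<Longrightarrow> a \<in> A \<Longrightarrow> seq_scale c a \<in> A"
    and cvx: "seq_convex A"
    and A0: "0 \<in> A"
    and absorb: "\<And>x. x \<in> X \<Longrightarrow> \<exists>t>0. \<exists>a\<in>A. x = seq_scale (complex_of_real t) a"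
  shows "\<And>x. x \<in> X \<Longrightarrow> 0 \<le> mink A x"
    and "\<And>x y. x \<in> X \<Longrightarrow> y \<in> X \<Longrightarrow> mink A (x + y) \<le> mink A x + mink A y"
    and "\<And>c x. x \<in> X \<Longrightarrow> mink A (seq_scale c x) = cmod c * mink A x"
    and "\<And>x. x \<in> X \<Longrightarrow> mink A x < 1 \<Longrightarrow> x \<in> A"
    and "\<And>x r a. r > 0 \<Longrightarrow> a \<in> A \<Longrightarrow> x = seq_scale (complex_of_real r) a \<Longrightarrow> mink A x \<le> r"
proof -
  define S where "S x = {t. 0 < t \<and> (\<exists>a\<in>A. x = seq_scale (complex_of_real t) a)}" for x
  have mS: "mink A x = Inf (S x)" for x by (simp add: mink_def S_def)
  have ne: "S x \<noteq> {}" if "x \<in> X" for x using absorb[OF that] by (auto simp: S_def)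
  have bdd: "bdd_below (S x)" for x by (rule bdd_belowI[of _ 0]) (auto simp: S_def)
  have up: "t' \<in> S x" if tt: "t \<in> S x" "t \<le> t'" for x t t'
  proof -
    obtain a where a: "0 < t" "a \<in> A" "x = seq_scale (complex_of_real t) a" using tt(1) by (auto simp: S_def)
    have t': "t' > 0" using a tt by simp
    have "cmod (complex_of_real (t / t')) = t / t'" using a(1) t' by (subst norm_of_real) (simp add: abs_of_pos)
    moreover have "t / t' \<le> 1" using tt(2) t' by simp
    ultimately have m: "seq_scale (complex_of_real (t / t')) a \<in> A"
      using bal[OF _ a(2), of "complex_of_real (t/t')"] by simp
    have xe: "x = seq_scale (complex_of_real t') (seq_scale (complex_of_real (t / t')) a)"
      using a(3) t' by simp
    show ?thesis unfolding S_def using t' m xe by blast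
  qed
  have lower: "mink A x \<le> s" if "s \<in> S x" for x s
    unfolding mS using that bdd by (rule cInf_lower)
  have less: "s \<in> S x" if xs: "x \<in> X" "mink A x < s" for x s
  proof -
    obtain t where "t \<in> S x" "t < s" using cInf_lessD[OF ne[OF xs(1)]] xs(2) mS by metis
    then show ?thesis using up by force
  qed
  show nonneg: "0 \<le> mink A x" if "x \<in> X" for x
    unfolding mS by (rule cInf_greatest[OF ne[OF that]]) (auto simp: S_def)
  show "mink A x \<le> r" if "r > 0" "a \<in> A" "x = seq_scale (complex_of_real r) a" for x r a
    using that by (intro lower) (auto simp: S_def)
  show "x \<in> A" if "x \<in> X" "mink A x < 1" for x
  proof -
    have "1 \<in> S x" using less that by blast
    then show ?thesis by (auto simp: S_def)
  qed
  show "mink A (x + y) \<le> mink A x + mink A y" if xy: "x \<in> X" "y \<in> X" for x y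
  proof (rule field_le_epsilon)
    fix e :: real assume e: "e > 0"
    define s where "s = mink A x + e/2"
    define t where "t = mink A y + e/2"
    have "s \<in> S x" "t \<in> S y" using less xy e nonneg unfolding s_def t_def by auto
    then obtain a b where ab: "s > 0" "t > 0" "a \<in> A" "b \<in> A"
      "x = seq_scale (complex_of_real s) a" "y = seq_scale (complex_of_real t) b"
      by (auto simp: S_def)
    define l where "l = s / (s + t)"
    have l: "0 \<le> l" "l \<le> 1" using ab by (auto simp: l_def)
    have c: "seq_add (seq_scale (complex_of_real l) a) (seq_scale (complex_of_real (1 - l)) b) \<in> A"
      using cvx ab l unfolding seq_convex_def by blast
    have "1 - l = t / (s + t)" using ab by (simp add: l_def field_simps)
    have st: "complex_of_real s + complex_of_real t \<noteq> 0"
      by (metis ab(1,2) add_pos_pos of_real_add of_real_eq_0_iff order_less_irrefl)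
    have "(s + t) * l = s" using ab by (simp add: l_def)
    then have e1: "complex_of_real (s + t) * complex_of_real l = complex_of_real s" by (metis of_real_mult)
    have "(s + t) * (1 - l) = t" using ab by (simp add: l_def field_simps)
    then have e2: "complex_of_real (s + t) * complex_of_real (1 - l) = complex_of_real t" by (metis of_real_mult)
    have "x + y = seq_scale (complex_of_real (s + t))
        (seq_add (seq_scale (complex_of_real l) a) (seq_scale (complex_of_real (1 - l)) b))"
      by (simp only: seq_add_eq scale_add scale_scale e1 e2 ab(5,6))
    then have "s + t \<in> S (x + y)" using c ab by (auto simp: S_def)
    then have "mink A (x + y) \<le> s + t" by (rule lower)
    then show "mink A (x + y) \<le> mink A x + mink A y + e" by (simp add: s_def t_def)
  qed
  have hle: "mink A (seq_scale c x) \<le> cmod c * mink A x" if cx: "x \<in> X" "c \<noteq> 0" for c x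
  proof (rule le_eps_mult[of "cmod c"])
    show "cmod c > 0" using cx by simp
    fix e :: real assume e: "e > 0"
    define m where "m = mink A x + e"
    have "m \<in> S x" using less cx e unfolding m_def by auto
    then obtain a where a: "m > 0" "a \<in> A" "x = seq_scale (complex_of_real m) a"
      by (auto simp: S_def)
    define u where "u = c / complex_of_real (cmod c)"
    have u: "cmod u = 1" using cx by (simp add: u_def norm_divide)
    have ua: "seq_scale u a \<in> A" using bal u a by simp
    have eq: "complex_of_real (cmod c * m) * u = c * complex_of_real m" using cx by (simp add: u_def)
    have xe: "seq_scale c x = seq_scale (complex_of_real (cmod c * m)) (seq_scale u a)"
      by (simp only: a(3) scale_scale eq)
    have "cmod c * m > 0" using a cx by simp
    then have "cmod c * m \<in> S (seq_scale c x)" unfolding S_def using ua xe by blast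
    then show "mink A (seq_scale c x) \<le> cmod c * mink A x + cmod c * e"
      using lower by (simp add: algebra_simps m_def)
  qed
  show "mink A (seq_scale c x) = cmod c * mink A x" if "x \<in> X" for c x
  proof (cases "c = 0")
    case True
    have "S 0 = {0<..}" using A0 by (auto simp: S_def intro!: bexI[of _ 0])
    then have "mink A 0 = 0" by (simp add: mS)
    then show ?thesis using True by simp
  next
    case False
    have cx: "seq_scale c x \<in> X" using sub that by (simp add: cvec_subspace_def)
    have "mink A x = mink A (seq_scale (inverse c) (seq_scale c x))" using False by simp
    also have "\<dots> \<le> cmod (inverse c) * mink A (seq_scale c x)" by (rule hle[OF cx]) (use False in simp)
    finally have fin: "mink A x \<le> inverse (cmod c) * mink A (seq_scale c x)" by (simp add: norm_inverse)
    have "cmod c * mink A x \<le> cmod c * (inverse (cmod c) * mink A (seq_scale c x))"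
      by (rule mult_left_mono[OF fin]) simp
    moreover have "cmod c * (inverse (cmod c) * mink A (seq_scale c x)) = mink A (seq_scale c x)"
      using False by (simp add: field_simps)
    ultimately have "cmod c * mink A x \<le> mink A (seq_scale c x)" by simp
    then show ?thesis using hle[OF that False] by simp
  qed
qed


definition abscvx :: "cseq set \<Rightarrow> cseq set \<Rightarrow> bool" where
  "abscvx X A \<longleftrightarrow> cvec_subspace X \<and> (\<forall>c a. cmod c \<le> 1 \<longrightarrow> a \<in> A \<longrightarrow> seq_scale c a \<in> A) \<and>
     seq_convex A \<and> 0 \<in> A \<and> (\<forall>x\<in>X. \<exists>t>0. \<exists>a\<in>A. x = seq_scale (complex_of_real t) a)"

lemma mink_props':
  assumes "abscvx X A"
  shows "\<And>x. x \<in> X \<Longrightarrow> 0 \<le> mink A x"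
    and "\<And>x y. x \<in> X \<Longrightarrow> y \<in> X \<Longrightarrow> mink A (x + y) \<le> mink A x + mink A y"
    and "\<And>c x. x \<in> X \<Longrightarrow> mink A (seq_scale c x) = cmod c * mink A x"
    and "\<And>x. x \<in> X \<Longrightarrow> mink A x < 1 \<Longrightarrow> x \<in> A"
    and "\<And>x r a. r > 0 \<Longrightarrow> a \<in> A \<Longrightarrow> x = seq_scale (complex_of_real r) a \<Longrightarrow> mink A x \<le> r"
proof -
  have sub: "cvec_subspace X" and bal: "\<And>c a. cmod c \<le> 1 \<Longrightarrow> a \<in> A \<Longrightarrow> seq_scale c a \<in> A"
    and cvx: "seq_convex A" and A0: "0 \<in> A"
    and ab: "\<And>x. x \<in> X \<Longrightarrow> \<exists>t>0. \<exists>a\<in>A. x = seq_scale (complex_of_real t) a"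
    using assms unfolding abscvx_def by blast+
  note M = mink_props[OF sub bal cvx A0 ab]
  show "\<And>x. x \<in> X \<Longrightarrow> 0 \<le> mink A x" by (rule M(1))
  show "\<And>x y. x \<in> X \<Longrightarrow> y \<in> X \<Longrightarrow> mink A (x + y) \<le> mink A x + mink A y" by (rule M(2))
  show "\<And>c x. x \<in> X \<Longrightarrow> mink A (seq_scale c x) = cmod c * mink A x" by (rule M(3))
  show "\<And>x. x \<in> X \<Longrightarrow> mink A x < 1 \<Longrightarrow> x \<in> A" by (rule M(4))
  show "\<And>x r a. r > 0 \<Longrightarrow> a \<in> A \<Longrightarrow> x = seq_scale (complex_of_real r) a \<Longrightarrow> mink A x \<le> r" by (rule M(5))
qed

context fks begin

lemma absconv:
  assumes "openin T N" "0 \<in> N"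
  shows "\<exists>A Ob. A \<subseteq> N \<and> A \<subseteq> X \<and> openin T Ob \<and> 0 \<in> Ob \<and> Ob \<subseteq> A \<and> seq_convex A \<and>
     (\<forall>c a. cmod c \<le> 1 \<longrightarrow> a \<in> A \<longrightarrow> seq_scale c a \<in> A)"
proof -
  obtain C where C: "openin T C" "0 \<in> C" "C \<subseteq> N" "seq_convex C" using lconv[OF assms] by blast
  have CX: "C \<subseteq> X" using C(1) openin_subset top by blast
  define P where "P = {z \<in> topspace (prod_topology euclidean T). (\<lambda>(c, x). seq_scale c x) z \<in> C}"
  have P: "openin (prod_topology euclidean T) P"
    unfolding P_def by (rule openin_continuous_map_preimage[OF scalec C(1)])
  have "(0, 0) \<in> P" using C(2) X0 by (simp add: P_def top)
  with P have "\<exists>U V. openin euclidean U \<and> openin T V \<and> 0 \<in> U \<and> 0 \<in> V \<and> U \<times> V \<subseteq> P"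
    unfolding openin_prod_topology_alt by blast
  then obtain U V where UV: "openin euclidean U" "openin T V" "0 \<in> U" "0 \<in> V" "U \<times> V \<subseteq> P"
    by blast
  have "open U" using UV(1) by simp
  then obtain d where d: "d > 0" "ball 0 d \<subseteq> U" using UV(3) open_contains_ball by blast
  have H: "seq_scale c v \<in> C" if "cmod c < d" "v \<in> V" for c v
  proof -
    have "c \<in> U" using d that by (auto simp: dist_norm)
    then show ?thesis using UV(5) that by (auto simp: P_def)
  qed
  define Ob where "Ob = {z\<in>X. seq_scale (complex_of_real (2/d)) z \<in> V}"
  have Ob: "openin T Ob" unfolding Ob_def by (rule open_scale[OF UV(2)])
  have O0: "0 \<in> Ob" using X0 UV(4) by (simp add: Ob_def)
  define A where "A = {x\<in>X. \<forall>c. cmod c = 1 \<longrightarrow> seq_scale c x \<in> C}"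
  have OA: "Ob \<subseteq> A"
  proof
    fix z assume z: "z \<in> Ob"
    have "seq_scale c z \<in> C" if c1: "cmod c = 1" for c
    proof -
      have v: "seq_scale (complex_of_real (2/d)) z \<in> V" using z by (simp add: Ob_def)
      have cm: "cmod (c * complex_of_real (d/2)) < d" using c1 d by (simp add: norm_mult)
      have F: "seq_scale (c * complex_of_real (d/2)) (seq_scale (complex_of_real (2/d)) z) \<in> C"
        using H[OF cm v] .
      have eqc: "c * complex_of_real (d/2) * complex_of_real (2/d) = c" using d by simp
      show ?thesis using F by (simp only: scale_scale eqc)
    qed
    then show "z \<in> A" using z by (simp add: A_def Ob_def)
  qed
  have AN: "A \<subseteq> N"
  proof
    fix x assume "x \<in> A"
    then have "\<forall>c. cmod c = 1 \<longrightarrow> seq_scale c x \<in> C" by (simp add: A_def)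
    then have "seq_scale 1 x \<in> C" using norm_one by blast
    then show "x \<in> N" using C(3) by auto
  qed
  have AX: "A \<subseteq> X" by (auto simp: A_def)
  have cvx: "seq_convex A"
    unfolding seq_convex_def
  proof (intro ballI allI impI)
    fix a b t assume ab: "a \<in> A" "b \<in> A" and t: "0 \<le> t \<and> t \<le> (1::real)"
    have X: "seq_add (seq_scale (complex_of_real t) a) (seq_scale (complex_of_real (1 - t)) b) \<in> X"
      unfolding seq_add_eq by (intro Xadd Xscale) (use ab AX in auto)
    have "seq_scale c (seq_add (seq_scale (complex_of_real t) a) (seq_scale (complex_of_real (1 - t)) b)) \<in> C"
      if "cmod c = 1" for c
    proof -
      have "seq_scale c a \<in> C" "seq_scale c b \<in> C" using ab that by (auto simp: A_def)
      then have "seq_add (seq_scale (complex_of_real t) (seq_scale c a)) (seq_scale (complex_of_real (1 - t)) (seq_scale c b)) \<in> C"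
        using C(4) t unfolding seq_convex_def by blast
      then show ?thesis by (simp add: scale_add mult.commute)
    qed
    then show "seq_add (seq_scale (complex_of_real t) a) (seq_scale (complex_of_real (1 - t)) b) \<in> A"
      using X by (simp add: A_def)
  qed
  have bal: "seq_scale e a \<in> A" if e1: "cmod e \<le> 1" "a \<in> A" for e a
  proof -
    have X: "seq_scale e a \<in> X" using e1 AX Xscale by auto
    have "seq_scale c (seq_scale e a) \<in> C" if c: "cmod c = 1" for c
    proof (cases "e = 0")
      case True then show ?thesis using C(2) by simp
    next
      case False
      define u where "u = c * e / complex_of_real (cmod e)"
      have "cmod u = 1" using False c by (simp add: u_def norm_mult norm_divide)
      then have ua: "seq_scale u a \<in> C" using \<open>a \<in> A\<close> by (simp add: A_def)
      have t: "0 \<le> cmod e \<and> cmod e \<le> 1" using e1 by simp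
      have "seq_add (seq_scale (complex_of_real (cmod e)) (seq_scale u a)) (seq_scale (complex_of_real (1 - cmod e)) 0) \<in> C"
        using C(4) ua C(2) t unfolding seq_convex_def by blast
      moreover have "seq_add (seq_scale (complex_of_real (cmod e)) (seq_scale u a)) (seq_scale (complex_of_real (1 - cmod e)) 0)
          = seq_scale c (seq_scale e a)"
        using False by (simp add: u_def)
      ultimately show ?thesis by simp
    qed
    then show ?thesis using X by (simp add: A_def)
  qed
  show ?thesis
    apply (rule exI[of _ A], rule exI[of _ Ob])
    using AN AX Ob O0 OA cvx bal by simp
qed

lemma absorbing:
  assumes "openin T Ob" "0 \<in> Ob" "x \<in> X"
  shows "\<exists>t>0. seq_scale (complex_of_real (inverse t)) x \<in> Ob"
proof -
  have "openin euclidean {c \<in> topspace euclidean. seq_scale c x \<in> Ob}"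
    by (rule openin_continuous_map_preimage[OF scale_cont2[OF assms(3)] assms(1)])
  then have op: "open {c. seq_scale c x \<in> Ob}" by simp
  have "0 \<in> {c. seq_scale c x \<in> Ob}" using assms by simp
  then obtain d where d: "d > 0" "ball 0 d \<subseteq> {c. seq_scale c x \<in> Ob}"
    using op open_contains_ball by blast
  have "complex_of_real (d/2) \<in> ball 0 d" using d by (simp add: dist_norm)
  then have "seq_scale (complex_of_real (d/2)) x \<in> Ob" using d(2) by blast
  moreover have "complex_of_real (inverse (2/d)) = complex_of_real (d/2)" by simp
  ultimately have "seq_scale (complex_of_real (inverse (2/d))) x \<in> Ob" by simp
  moreover have "2/d > 0" using d by simp
  ultimately show ?thesis by blast
qed

end

definition semifam :: "cseq set \<Rightarrow> cseq topology \<Rightarrow> (nat \<Rightarrow> cseq \<Rightarrow> real) \<Rightarrow> bool" where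
  "semifam X T \<nu> \<longleftrightarrow> (\<forall>k x. x \<in> X \<longrightarrow> 0 \<le> \<nu> k x) \<and>
     (\<forall>k x y. x \<in> X \<longrightarrow> y \<in> X \<longrightarrow> \<nu> k (x + y) \<le> \<nu> k x + \<nu> k y) \<and>
     (\<forall>k c x. x \<in> X \<longrightarrow> \<nu> k (seq_scale c x) = cmod c * \<nu> k x) \<and>
     (\<forall>k k' x. k \<le> k' \<longrightarrow> x \<in> X \<longrightarrow> \<nu> k x \<le> \<nu> k' x) \<and>
     (\<forall>U. openin T U \<and> 0 \<in> U \<longrightarrow> (\<exists>k. \<forall>z\<in>X. \<nu> k z < 1 \<longrightarrow> z \<in> U)) \<and>
     (\<forall>k e. e > 0 \<longrightarrow> (\<exists>W. openin T W \<and> 0 \<in> W \<and> (\<forall>z\<in>W. \<nu> k z < e)))"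

context fks begin

lemma nu_exists: "\<exists>\<nu>. semifam X T \<nu>"
proof -
  obtain B :: "nat \<Rightarrow> cseq set" where B: "\<And>k. openin T (B k)" "\<And>k. 0 \<in> B k"
    "\<And>U. openin T U \<Longrightarrow> 0 \<in> U \<Longrightarrow> \<exists>k. B k \<subseteq> U"
    using base0 by blast
  define P where "P k A Ob \<longleftrightarrow> A \<subseteq> B k \<and> A \<subseteq> X \<and> openin T Ob \<and> 0 \<in> Ob \<and> Ob \<subseteq> A \<and> seq_convex A \<and>
     (\<forall>c a. cmod c \<le> 1 \<longrightarrow> a \<in> A \<longrightarrow> seq_scale c a \<in> A)" for k A Ob
  have "\<forall>k. \<exists>p. P k (fst p) (snd p)"
  proof
    fix k
    obtain A Ob where "P k A Ob" using absconv[OF B(1) B(2), of k] unfolding P_def by blast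
    then show "\<exists>p. P k (fst p) (snd p)" by (intro exI[of _ "(A, Ob)"]) simp
  qed
  then obtain f where f: "\<And>k. P k (fst (f k)) (snd (f k))" by metis
  define A where "A k = fst (f k)" for k
  define Ob where "Ob k = snd (f k)" for k
  have PA: "P k (A k) (Ob k)" for k using f by (simp add: A_def Ob_def)
  have AB: "A k \<subseteq> B k" and AX: "A k \<subseteq> X" and Oo: "openin T (Ob k)" and O0: "0 \<in> Ob k"
    and OA: "Ob k \<subseteq> A k" and cvx: "seq_convex (A k)"
    and bal: "\<And>c a. cmod c \<le> 1 \<Longrightarrow> a \<in> A k \<Longrightarrow> seq_scale c a \<in> A k" for k
    using PA[of k] unfolding P_def by blast+
  have absorb: "\<exists>t>0. \<exists>a\<in>A k. x = seq_scale (complex_of_real t) a" if "x \<in> X" for k x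
  proof -
    obtain t where t: "t > 0" "seq_scale (complex_of_real (inverse t)) x \<in> Ob k"
      using absorbing[OF Oo O0 \<open>x \<in> X\<close>] by blast
    have "x = seq_scale (complex_of_real t) (seq_scale (complex_of_real (inverse t)) x)"
      using t(1) by simp
    then show ?thesis using t OA by blast
  qed
  have A0: "0 \<in> A k" for k using O0 OA by blast
  have ac: "abscvx X (A k)" for k unfolding abscvx_def using sub bal cvx A0 absorb by blast
  note M = mink_props'[OF ac]
  define \<mu> where "\<mu> k = mink (A k)" for k
  define \<nu> where "\<nu> k x = (\<Sum>i\<le>k. \<mu> i x)" for k x
  have mu_nonneg: "0 \<le> \<mu> i x" if "x \<in> X" for i x using M(1)[OF that] by (simp add: \<mu>_def)
  have s1: "\<forall>k x. x \<in> X \<longrightarrow> 0 \<le> \<nu> k x"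
    unfolding \<nu>_def using mu_nonneg by (simp add: sum_nonneg)
  have s2: "\<forall>k x y. x \<in> X \<longrightarrow> y \<in> X \<longrightarrow> \<nu> k (x + y) \<le> \<nu> k x + \<nu> k y"
  proof (intro allI impI)
    fix k x y assume xy: "x \<in> X" "y \<in> X"
    have "\<nu> k (x + y) \<le> (\<Sum>i\<le>k. \<mu> i x + \<mu> i y)"
      unfolding \<nu>_def by (rule sum_mono) (use M(2)[OF xy] in \<open>simp add: \<mu>_def\<close>)
    then show "\<nu> k (x + y) \<le> \<nu> k x + \<nu> k y" by (simp add: \<nu>_def sum.distrib)
  qed
  have s3: "\<forall>k c x. x \<in> X \<longrightarrow> \<nu> k (seq_scale c x) = cmod c * \<nu> k x"
    using M(3) by (simp add: \<nu>_def \<mu>_def sum_distrib_left)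
  have s4: "\<forall>k k' x. k \<le> k' \<longrightarrow> x \<in> X \<longrightarrow> \<nu> k x \<le> \<nu> k' x"
  proof (intro allI impI)
    fix k k' :: nat and x :: cseq assume kx: "k \<le> k'" "x \<in> X"
    show "\<nu> k x \<le> \<nu> k' x" unfolding \<nu>_def
      by (rule sum_mono2) (use kx mu_nonneg in auto)
  qed
  have mu_le: "\<mu> k x \<le> \<nu> k x" if "x \<in> X" for k x
    unfolding \<nu>_def by (rule member_le_sum) (use mu_nonneg that in auto)
  have s5: "\<forall>U. openin T U \<and> 0 \<in> U \<longrightarrow> (\<exists>k. \<forall>z\<in>X. \<nu> k z < 1 \<longrightarrow> z \<in> U)"
  proof (intro allI impI)
    fix U assume U: "openin T U \<and> 0 \<in> U"
    then obtain k where k: "B k \<subseteq> U" using B(3) by blast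
    have "z \<in> U" if "z \<in> X" "\<nu> k z < 1" for z
    proof -
      have "\<mu> k z < 1" using mu_le[OF that(1), of k] that(2) by simp
      then have "z \<in> A k" using M(4)[OF that(1)] by (simp add: \<mu>_def)
      then show ?thesis using AB k by blast
    qed
    then show "\<exists>k. \<forall>z\<in>X. \<nu> k z < 1 \<longrightarrow> z \<in> U" by blast
  qed
  have s6: "\<forall>k e. e > 0 \<longrightarrow> (\<exists>W. openin T W \<and> 0 \<in> W \<and> (\<forall>z\<in>W. \<nu> k z < e))"
  proof (intro allI impI)
    fix k and e :: real assume e: "e > 0"
    define r where "r = e / (2 * (real k + 1))"
    have r: "r > 0" using e by (simp add: r_def)
    define W where "W = \<Inter> ((\<lambda>i. {z\<in>X. seq_scale (complex_of_real (inverse r)) z \<in> Ob i}) ` {..k})"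
    have Wo: "openin T W" unfolding W_def
      by (rule openin_Inter) (auto intro: open_scale Oo)
    have W0: "0 \<in> W" using X0 O0 by (simp add: W_def)
    have "\<nu> k z < e" if z: "z \<in> W" for z
    proof -
      have zX: "z \<in> X" using z by (auto simp: W_def)
      have "\<mu> i z \<le> r" if "i \<le> k" for i
      proof -
        have "seq_scale (complex_of_real (inverse r)) z \<in> A i" using z that OA by (auto simp: W_def)
        moreover have "z = seq_scale (complex_of_real r) (seq_scale (complex_of_real (inverse r)) z)"
          using r by simp
        ultimately show ?thesis unfolding \<mu>_def by (rule M(5)[OF r])
      qed
      then have "\<nu> k z \<le> (\<Sum>i\<le>k. r)" unfolding \<nu>_def by (intro sum_mono) auto
      also have "\<dots> = (real k + 1) * r" by simp
      also have "\<dots> = e / 2" unfolding r_def by (simp add: field_simps)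
      finally show ?thesis using e by simp
    qed
    then show "\<exists>W. openin T W \<and> 0 \<in> W \<and> (\<forall>z\<in>W. \<nu> k z < e)" using Wo W0 by blast
  qed
  show ?thesis unfolding semifam_def
    by (rule exI[of _ \<nu>], rule conjI[OF s1 conjI[OF s2 conjI[OF s3 conjI[OF s4 conjI[OF s5 s6]]]]])
qed

definition nu :: "nat \<Rightarrow> cseq \<Rightarrow> real" where "nu = (SOME \<nu>. semifam X T \<nu>)"

lemma nu_semifam: "semifam X T nu"
  unfolding nu_def using nu_exists by (rule someI_ex)

lemma nu_H: "(\<forall>k x. x \<in> X \<longrightarrow> 0 \<le> nu k x) \<and>
     (\<forall>k x y. x \<in> X \<longrightarrow> y \<in> X \<longrightarrow> nu k (x + y) \<le> nu k x + nu k y) \<and>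
     (\<forall>k c x. x \<in> X \<longrightarrow> nu k (seq_scale c x) = cmod c * nu k x) \<and>
     (\<forall>k k' x. k \<le> k' \<longrightarrow> x \<in> X \<longrightarrow> nu k x \<le> nu k' x) \<and>
     (\<forall>U. openin T U \<and> 0 \<in> U \<longrightarrow> (\<exists>k. \<forall>z\<in>X. nu k z < 1 \<longrightarrow> z \<in> U)) \<and>
     (\<forall>k e. e > 0 \<longrightarrow> (\<exists>W. openin T W \<and> 0 \<in> W \<and> (\<forall>z\<in>W. nu k z < e)))"
  using nu_semifam unfolding semifam_def .

lemma nu_nonneg: "x \<in> X \<Longrightarrow> 0 \<le> nu k x"
  using nu_H by simp
lemma nu_tri: "x \<in> X \<Longrightarrow> y \<in> X \<Longrightarrow> nu k (x + y) \<le> nu k x + nu k y"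
  using nu_H by simp
lemma nu_scale: "x \<in> X \<Longrightarrow> nu k (seq_scale c x) = cmod c * nu k x"
  using nu_H by simp
lemma nu_mono: "k \<le> k' \<Longrightarrow> x \<in> X \<Longrightarrow> nu k x \<le> nu k' x"
  using nu_H by simp
lemma nu_base: "openin T U \<Longrightarrow> 0 \<in> U \<Longrightarrow> \<exists>k. \<forall>z\<in>X. nu k z < 1 \<longrightarrow> z \<in> U"
proof -
  assume "openin T U" "0 \<in> U"
  moreover have "\<forall>U. openin T U \<and> 0 \<in> U \<longrightarrow> (\<exists>k. \<forall>z\<in>X. nu k z < 1 \<longrightarrow> z \<in> U)"
    using nu_H by (elim conjE)
  ultimately show ?thesis by blast
qed
lemma nu_nbhd: "e > 0 \<Longrightarrow> \<exists>W. openin T W \<and> 0 \<in> W \<and> (\<forall>z\<in>W. nu k z < e)"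
proof -
  assume "e > 0"
  moreover have "\<forall>k e. e > 0 \<longrightarrow> (\<exists>W. openin T W \<and> 0 \<in> W \<and> (\<forall>z\<in>W. nu k z < e))"
    using nu_H by (elim conjE)
  ultimately show ?thesis by blast
qed

lemma nu_zero[simp]: "nu k 0 = 0"
  using nu_scale[OF X0, of k 0] by simp

lemma nu_neg: "x \<in> X \<Longrightarrow> nu k (- x) = nu k x"
  using nu_scale[of x k "-1"] by (simp add: scale_m1)

lemma nu_sym: "x \<in> X \<Longrightarrow> y \<in> X \<Longrightarrow> nu k (x - y) = nu k (y - x)"
  using nu_neg[OF Xdiff[of y x]] by simp

lemma nu_tri_diff: "x \<in> X \<Longrightarrow> y \<in> X \<Longrightarrow> z \<in> X \<Longrightarrow> nu k (x - z) \<le> nu k (x - y) + nu k (y - z)"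
  using nu_tri[OF Xdiff[of x y] Xdiff[of y z]] by simp

lemma nu_tri_diff2: "x \<in> X \<Longrightarrow> y \<in> X \<Longrightarrow> nu k (x - y) \<le> nu k x + nu k y"
  using nu_tri[OF _ Xneg[of y], of x k] nu_neg[of y k] by simp

lemma limit_nu:
  assumes s: "\<And>n. s n \<in> X" and l: "l \<in> X"
  shows "limitin T s l sequentially \<longleftrightarrow>
    (\<forall>k e. e > 0 \<longrightarrow> eventually (\<lambda>n. nu k (s n - l) < e) sequentially)"
proof
  assume lim: "limitin T s l sequentially"
  show "\<forall>k e. e > 0 \<longrightarrow> eventually (\<lambda>n. nu k (s n - l) < e) sequentially"
  proof (intro allI impI)
    fix k and e :: real assume e: "e > 0"
    obtain W where W: "openin T W" "0 \<in> W" "\<And>z. z \<in> W \<Longrightarrow> nu k z < e" using nu_nbhd[OF e, of k] by blast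
    define U where "U = {z\<in>X. z + - l \<in> W}"
    have U: "openin T U" unfolding U_def by (rule open_transl[OF W(1) Xneg[OF l]])
    have lU: "l \<in> U" using l W(2) by (simp add: U_def)
    have "eventually (\<lambda>n. s n \<in> U) sequentially" using lim U lU unfolding limitin_def by blast
    then show "eventually (\<lambda>n. nu k (s n - l) < e) sequentially"
      by eventually_elim (use W(3) in \<open>auto simp: U_def\<close>)
  qed
next
  assume H: "\<forall>k e. e > 0 \<longrightarrow> eventually (\<lambda>n. nu k (s n - l) < e) sequentially"
  show "limitin T s l sequentially" unfolding limitin_def
  proof (intro conjI allI impI)
    show "l \<in> topspace T" using l top by simp
    fix U assume U: "openin T U \<and> l \<in> U"
    define V where "V = {z\<in>X. z + l \<in> U}"
    have V: "openin T V" unfolding V_def by (rule open_transl[OF conjunct1[OF U] l])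
    have V0: "0 \<in> V" using U X0 by (simp add: V_def)
    obtain k where k: "\<And>z. z \<in> X \<Longrightarrow> nu k z < 1 \<Longrightarrow> z \<in> V" using nu_base[OF V V0] by blast
    have "eventually (\<lambda>n. nu k (s n - l) < 1) sequentially" using H by simp
    then show "eventually (\<lambda>n. s n \<in> U) sequentially"
    proof eventually_elim
      case (elim n)
      then have "s n - l \<in> V" using k Xdiff[OF s l] by blast
      then show ?case by (simp add: V_def)
    qed
  qed
qed

lemma closure_nu:
  assumes S: "S \<subseteq> X"
  shows "y \<in> T closure_of S \<longleftrightarrow> y \<in> X \<and> (\<forall>k e. e > 0 \<longrightarrow> (\<exists>z\<in>S. nu k (z - y) < e))"
proof
  assume y: "y \<in> T closure_of S"
  then have yX: "y \<in> X" using in_closure_of top by fastforce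
  have "\<exists>z\<in>S. nu k (z - y) < e" if e: "e > 0" for k e
  proof -
    obtain W where W: "openin T W" "0 \<in> W" "\<And>z. z \<in> W \<Longrightarrow> nu k z < e" using nu_nbhd[OF e, of k] by blast
    define U where "U = {z\<in>X. z + - y \<in> W}"
    have U: "openin T U" unfolding U_def by (rule open_transl[OF W(1) Xneg[OF yX]])
    have yU: "y \<in> U" using yX W(2) by (simp add: U_def)
    obtain z where "z \<in> S" "z \<in> U" using y U yU unfolding in_closure_of by blast
    then show ?thesis using W(3) by (auto simp: U_def)
  qed
  then show "y \<in> X \<and> (\<forall>k e. e > 0 \<longrightarrow> (\<exists>z\<in>S. nu k (z - y) < e))" using yX by blast
next
  assume H: "y \<in> X \<and> (\<forall>k e. e > 0 \<longrightarrow> (\<exists>z\<in>S. nu k (z - y) < e))"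
  show "y \<in> T closure_of S" unfolding in_closure_of
  proof (intro conjI allI impI)
    show "y \<in> topspace T" using H top by simp
    fix U assume U: "y \<in> U \<and> openin T U"
    define V where "V = {z\<in>X. z + y \<in> U}"
    have V: "openin T V" unfolding V_def by (rule open_transl) (use U H in auto)
    have V0: "0 \<in> V" using U X0 by (simp add: V_def)
    obtain k where k: "\<And>z. z \<in> X \<Longrightarrow> nu k z < 1 \<Longrightarrow> z \<in> V" using nu_base[OF V V0] by blast
    obtain z where z: "z \<in> S" "nu k (z - y) < 1" using H by (meson zero_less_one)
    have "z - y \<in> V" using k z S H Xdiff by blast
    then show "\<exists>z. z \<in> S \<and> z \<in> U" using z(1) by (auto simp: V_def)
  qed
qed

lemma closed_nu:
  "closedin T S \<longleftrightarrow> S \<subseteq> X \<and> (\<forall>y\<in>X. (\<forall>k e. e > 0 \<longrightarrow> (\<exists>z\<in>S. nu k (z - y) < e)) \<longrightarrow> y \<in> S)"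
proof -
  have "closedin T S \<longleftrightarrow> S \<subseteq> X \<and> T closure_of S \<subseteq> S"
    using closure_of_subset_eq[of S T] top by simp
  then show ?thesis using closure_nu by blast
qed

lemma cont_nu:
  assumes lin_add: "\<And>x y. x \<in> X \<Longrightarrow> y \<in> X \<Longrightarrow> f (x + y) = f x + f y"
    and lin_scale: "\<And>c x. x \<in> X \<Longrightarrow> f (seq_scale c x) = c * f x"
    and bd: "\<And>x. x \<in> X \<Longrightarrow> cmod (f x) \<le> C * nu k x"
  shows "continuous_map T euclidean f"
  unfolding continuous_map_def
proof (intro conjI allI impI)
  show "f \<in> topspace T \<rightarrow> topspace euclidean" by simp
  fix U :: "complex set" assume "openin euclidean U"
  then have U: "open U" by simp
  show "openin T {x \<in> topspace T. f x \<in> U}"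
  proof (rule openin_subopen[THEN iffD2], intro ballI)
    fix x0 assume x0: "x0 \<in> {x \<in> topspace T. f x \<in> U}"
    then have x0X: "x0 \<in> X" and fx0: "f x0 \<in> U" using top by auto
    obtain r where r: "r > 0" "ball (f x0) r \<subseteq> U" using U fx0 open_contains_ball by blast
    define C' where "C' = max C 0 + 1"
    have C': "C' > 0" by (simp add: C'_def)
    obtain W where W: "openin T W" "0 \<in> W" "\<And>z. z \<in> W \<Longrightarrow> nu k z < r / C'"
      using nu_nbhd[of "r / C'" k] r C' by auto
    define G where "G = {z\<in>X. z + - x0 \<in> W}"
    have G: "openin T G" unfolding G_def by (rule open_transl[OF W(1) Xneg[OF x0X]])
    have x0G: "x0 \<in> G" using x0X W(2) by (simp add: G_def)
    have "G \<subseteq> {x \<in> topspace T. f x \<in> U}"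
    proof
      fix z assume z: "z \<in> G"
      then have zX: "z \<in> X" and zW: "z - x0 \<in> W" by (auto simp: G_def)
      have fneg: "f (- x0) = - f x0" using lin_scale[OF x0X, of "-1"] by (simp add: scale_m1)
      have e1: "f (z - x0) = f z - f x0" using lin_add[OF zX Xneg[OF x0X]] fneg by simp
      have e2: "cmod (f (z - x0)) \<le> C * nu k (z - x0)" using bd Xdiff[OF zX x0X] by blast
      have e3: "C * nu k (z - x0) \<le> C' * nu k (z - x0)"
        using nu_nonneg[OF Xdiff[OF zX x0X], of k] by (intro mult_right_mono) (auto simp: C'_def)
      have e4: "C' * nu k (z - x0) < r" using W(3)[OF zW] C' by (simp add: field_simps)
      have "cmod (f z - f x0) = cmod (f (z - x0))" using e1 by simp
      then have "cmod (f z - f x0) < r" using e2 e3 e4 by linarith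
      then have "dist (f z) (f x0) < r" by (simp only: dist_norm)
      then have "f z \<in> ball (f x0) r" by (simp add: dist_commute)
      then have "f z \<in> U" using r(2) by blast
      then show "z \<in> {x \<in> topspace T. f x \<in> U}" using zX top by simp
    qed
    then show "\<exists>G. openin T G \<and> x0 \<in> G \<and> G \<subseteq> {x \<in> topspace T. f x \<in> U}" using G x0G by blast
  qed
qed

lemma complete_nu:
  assumes s: "\<And>n. s n \<in> X"
    and cauchy: "\<And>k e. e > 0 \<Longrightarrow> \<exists>N. \<forall>m\<ge>N. \<forall>n\<ge>N. nu k (s m - s n) < e"
  shows "\<exists>l\<in>X. limitin T s l sequentially"
proof (rule compl)
  show "\<forall>n. s n \<in> X" using s by blast
  show "\<forall>U. openin T U \<and> 0 \<in> U \<longrightarrow> (\<exists>N. \<forall>m n. N \<le> m \<and> N \<le> n \<longrightarrow> s m - s n \<in> U)"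
  proof (intro allI impI)
    fix U assume U: "openin T U \<and> 0 \<in> U"
    have "\<exists>k. \<forall>z\<in>X. nu k z < 1 \<longrightarrow> z \<in> U" using U by (intro nu_base) auto
    then obtain k where k: "\<And>z. z \<in> X \<Longrightarrow> nu k z < 1 \<Longrightarrow> z \<in> U" by blast
    have "\<exists>N. \<forall>m\<ge>N. \<forall>n\<ge>N. nu k (s m - s n) < 1" by (rule cauchy) simp
    then obtain N where N: "\<forall>m\<ge>N. \<forall>n\<ge>N. nu k (s m - s n) < 1" by blast
    show "\<exists>N. \<forall>m n. N \<le> m \<and> N \<le> n \<longrightarrow> s m - s n \<in> U"
    proof (intro exI[of _ N] allI impI)
      fix m n assume "N \<le> m \<and> N \<le> n"
      then have "nu k (s m - s n) < 1" using N by blast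
      then show "s m - s n \<in> U" by (rule k[OF Xdiff[OF s s]])
    qed
  qed
qed

lemma coord_bound: "\<exists>k. \<forall>z\<in>X. cmod (z j) \<le> nu k z"
proof -
  have "openin T {z \<in> topspace T. z j \<in> ball 0 1}"
    by (rule openin_continuous_map_preimage[OF coordc]) simp
  then have U: "openin T {z\<in>X. cmod (z j) < 1}" using top by (simp add: dist_norm)
  have "0 \<in> {z\<in>X. cmod (z j) < 1}" using X0 by simp
  then obtain k where k: "\<And>z. z \<in> X \<Longrightarrow> nu k z < 1 \<Longrightarrow> cmod (z j) < 1"
    using nu_base[OF U] by blast
  have "cmod (z j) \<le> nu k z" if z: "z \<in> X" for z
  proof (rule dense_ge)
    fix t assume t: "nu k z < t"
    have tpos: "t > 0" using t nu_nonneg[OF z, of k] by simp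
    have nt: "cmod (complex_of_real (inverse t)) = inverse t" using tpos by (subst norm_of_real) simp
    have "nu k (seq_scale (complex_of_real (inverse t)) z) = inverse t * nu k z"
      using nu_scale[OF z, of k "complex_of_real (inverse t)"] by (simp only: nt)
    also have "\<dots> < 1" using t tpos by (simp add: field_simps)
    finally have "cmod (seq_scale (complex_of_real (inverse t)) z j) < 1"
      by (rule k[OF Xscale[OF z]])
    then have "inverse t * cmod (z j) < 1" by (simp only: scale_apply norm_mult nt)
    then show "cmod (z j) \<le> t" using tpos by (simp add: field_simps)
  qed
  then show ?thesis by blast
qed

end

abbreviation rsc :: "real \<Rightarrow> cseq \<Rightarrow> cseq" where "rsc t x \<equiv> seq_scale (complex_of_real t) x"

definition hbgood :: "cseq set \<Rightarrow> (cseq \<Rightarrow> real) \<Rightarrow> cseq set \<Rightarrow> (cseq \<Rightarrow> real) \<Rightarrow> (cseq \<times> real) set \<Rightarrow> bool" where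
  "hbgood X p M h G \<longleftrightarrow> (\<forall>x a. (x, a) \<in> G \<longrightarrow> x \<in> X) \<and> (\<forall>x a. (x, a) \<in> G \<longrightarrow> a \<le> p x) \<and>
     (\<forall>x a b. (x, a) \<in> G \<longrightarrow> (x, b) \<in> G \<longrightarrow> a = b) \<and>
     (\<forall>x a y b. (x, a) \<in> G \<longrightarrow> (y, b) \<in> G \<longrightarrow> (x + y, a + b) \<in> G) \<and>
     (\<forall>x a t. (x, a) \<in> G \<longrightarrow> (rsc t x, t * a) \<in> G) \<and>
     (\<forall>x\<in>M. (x, h x) \<in> G)"

lemma hb_real:
  assumes sub: "cvec_subspace X"
    and padd: "\<And>x y. x \<in> X \<Longrightarrow> y \<in> X \<Longrightarrow> p (x + y) \<le> p x + p y"
    and phom: "\<And>t x. x \<in> X \<Longrightarrow> t \<ge> 0 \<Longrightarrow> p (rsc t x) = t * p x"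
    and MX: "M \<subseteq> X" and M0: "0 \<in> M"
    and Madd: "\<And>x y. x \<in> M \<Longrightarrow> y \<in> M \<Longrightarrow> x + y \<in> M"
    and Msc: "\<And>t x. x \<in> M \<Longrightarrow> rsc t x \<in> M"
    and hadd: "\<And>x y. x \<in> M \<Longrightarrow> y \<in> M \<Longrightarrow> h (x + y) = h x + h y"
    and hsc: "\<And>t x. x \<in> M \<Longrightarrow> h (rsc t x) = t * h x"
    and hp: "\<And>x. x \<in> M \<Longrightarrow> h x \<le> p x"
  shows "\<exists>H. (\<forall>x\<in>X. \<forall>y\<in>X. H (x + y) = H x + H y) \<and> (\<forall>t. \<forall>x\<in>X. H (rsc t x) = t * H x) \<and>
    (\<forall>x\<in>M. H x = h x) \<and> (\<forall>x\<in>X. H x \<le> p x)"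
proof -
  note Xadd = subspace_facts(2)[OF sub] and Xsc = subspace_facts(3)[OF sub]
    and Xneg = subspace_facts(4)[OF sub] and Xdiff = subspace_facts(5)[OF sub]
  define A where "A = {G. hbgood X p M h G}"
  define G0 where "G0 = {(x, h x) | x. x \<in> M}"
  have G0A: "G0 \<in> A" unfolding A_def hbgood_def G0_def
    using MX hp Madd hadd Msc hsc by auto
  have "\<exists>G\<in>A. \<forall>G'\<in>A. G \<subseteq> G' \<longrightarrow> G' = G"
  proof (rule Zorn_Lemma2, intro ballI)
    fix C assume C: "C \<in> chains A"
    show "\<exists>U\<in>A. \<forall>G\<in>C. G \<subseteq> U"
    proof (cases "C = {}")
      case True then show ?thesis using G0A by blast
    next
      case False
      have CA: "C \<subseteq> A" using chainsD2[OF C] .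
      have good: "hbgood X p M h G" if "G \<in> C" for G using CA that by (auto simp: A_def)
      have two: "\<exists>G\<in>C. P \<in> G \<and> Q \<in> G" if "P \<in> G1" "G1 \<in> C" "Q \<in> G2" "G2 \<in> C" for P Q G1 G2
        using chainsD[OF C that(2) that(4)] that by blast
      have "hbgood X p M h (\<Union>C)" unfolding hbgood_def
      proof (intro conjI allI impI ballI)
        fix x a assume "(x, a) \<in> \<Union>C"
        then obtain G where G: "G \<in> C" "(x, a) \<in> G" by blast
        have "\<forall>x a. (x, a) \<in> G \<longrightarrow> x \<in> X" using good[OF G(1)] unfolding hbgood_def by (elim conjE)
        then show "x \<in> X" using G by blast
      next
        fix x a assume "(x, a) \<in> \<Union>C"
        then obtain G where G: "G \<in> C" "(x, a) \<in> G" by blast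
        have "\<forall>x a. (x, a) \<in> G \<longrightarrow> a \<le> p x" using good[OF G(1)] unfolding hbgood_def by (elim conjE)
        then show "a \<le> p x" using G by blast
      next
        fix x a b assume "(x, a) \<in> \<Union>C" "(x, b) \<in> \<Union>C"
        then obtain G where G: "G \<in> C" "(x, a) \<in> G" "(x, b) \<in> G" using two by (metis UnionE)
        have "\<forall>x a b. (x, a) \<in> G \<longrightarrow> (x, b) \<in> G \<longrightarrow> a = b" using good[OF G(1)] unfolding hbgood_def by (elim conjE)
        then show "a = b" using G by blast
      next
        fix x a y b assume "(x, a) \<in> \<Union>C" "(y, b) \<in> \<Union>C"
        then obtain G where G: "G \<in> C" "(x, a) \<in> G" "(y, b) \<in> G" using two by (metis UnionE)
        have "\<forall>x a y b. (x, a) \<in> G \<longrightarrow> (y, b) \<in> G \<longrightarrow> (x + y, a + b) \<in> G"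
          using good[OF G(1)] unfolding hbgood_def by (elim conjE)
        then show "(x + y, a + b) \<in> \<Union>C" using G by blast
      next
        fix x a t assume "(x, a) \<in> \<Union>C"
        then obtain G where G: "G \<in> C" "(x, a) \<in> G" by blast
        have "\<forall>x a t. (x, a) \<in> G \<longrightarrow> (rsc t x, t * a) \<in> G"
          using good[OF G(1)] unfolding hbgood_def by (elim conjE)
        then show "(rsc t x, t * a) \<in> \<Union>C" using G by blast
      next
        fix x assume x: "x \<in> M"
        obtain G where G: "G \<in> C" using False by blast
        have "\<forall>x\<in>M. (x, h x) \<in> G" using good[OF G] unfolding hbgood_def by (elim conjE)
        then show "(x, h x) \<in> \<Union>C" using G x by blast
      qed
      then show ?thesis by (auto simp: A_def)
    qed
  qed
  then obtain G where GA: "G \<in> A" and maxG: "\<And>G'. G' \<in> A \<Longrightarrow> G \<subseteq> G' \<Longrightarrow> G' = G" by blast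
  have gd: "hbgood X p M h G" using GA by (simp add: A_def)
  have gX: "\<And>x a. (x, a) \<in> G \<Longrightarrow> x \<in> X" and gp: "\<And>x a. (x, a) \<in> G \<Longrightarrow> a \<le> p x"
    using gd unfolding hbgood_def by blast+
  have gfun: "\<And>x a b. (x, a) \<in> G \<Longrightarrow> (x, b) \<in> G \<Longrightarrow> a = b"
  proof -
    have "\<forall>x a b. (x, a) \<in> G \<longrightarrow> (x, b) \<in> G \<longrightarrow> a = b" using gd unfolding hbgood_def by (elim conjE)
    then show "\<And>x a b. (x, a) \<in> G \<Longrightarrow> (x, b) \<in> G \<Longrightarrow> a = b" by blast
  qed
  have gadd: "\<And>x a y b. (x, a) \<in> G \<Longrightarrow> (y, b) \<in> G \<Longrightarrow> (x + y, a + b) \<in> G"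
  proof -
    have "\<forall>x a y b. (x, a) \<in> G \<longrightarrow> (y, b) \<in> G \<longrightarrow> (x + y, a + b) \<in> G"
      using gd unfolding hbgood_def by (elim conjE)
    then show "\<And>x a y b. (x, a) \<in> G \<Longrightarrow> (y, b) \<in> G \<Longrightarrow> (x + y, a + b) \<in> G" by blast
  qed
  have gsc: "\<And>x a t. (x, a) \<in> G \<Longrightarrow> (rsc t x, t * a) \<in> G"
  proof -
    have "\<forall>x a t. (x, a) \<in> G \<longrightarrow> (rsc t x, t * a) \<in> G"
      using gd unfolding hbgood_def by (elim conjE)
    then show "\<And>x a t. (x, a) \<in> G \<Longrightarrow> (rsc t x, t * a) \<in> G" by blast
  qed
  have gM: "\<And>x. x \<in> M \<Longrightarrow> (x, h x) \<in> G"
  proof -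
    have "\<forall>x\<in>M. (x, h x) \<in> G" using gd unfolding hbgood_def by (elim conjE)
    then show "\<And>x. x \<in> M \<Longrightarrow> (x, h x) \<in> G" by blast
  qed
  have g00: "(0, 0) \<in> G" using gsc[OF gM[OF M0], of 0] by simp
  have gneg: "(- x, - a) \<in> G" if "(x, a) \<in> G" for x a
    using gsc[OF that, of "-1"] by (simp add: scale_m1)
  have dom: "\<exists>a. (x, a) \<in> G" if x0: "x \<in> X" for x
  proof (rule ccontr)
    assume nd: "\<nexists>a. (x, a) \<in> G"
    define x0 where "x0 = x"
    have x0X: "x0 \<in> X" using x0 by (simp add: x0_def)
    define S where "S = {a - p (u - x0) | u a. (u, a) \<in> G}"
    have Sne: "S \<noteq> {}" using g00 by (auto simp: S_def)
    have key: "a - p (u - x0) \<le> p (v + x0) - b" if "(u, a) \<in> G" "(v, b) \<in> G" for u a v b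
    proof -
      have uX: "u \<in> X" and vX: "v \<in> X" using gX that by blast+
      have "a + b \<le> p (u + v)" using gp[OF gadd[OF that]] .
      also have "u + v = (u - x0) + (v + x0)" by simp
      also have "p \<dots> \<le> p (u - x0) + p (v + x0)" using padd Xdiff[OF uX x0X] Xadd[OF vX x0X] by blast
      finally show ?thesis by simp
    qed
    have Sbdd: "bdd_above S"
      unfolding bdd_above_def S_def using key[OF _ g00] by fastforce
    define c where "c = Sup S"
    have c1: "a - p (u - x0) \<le> c" if "(u, a) \<in> G" for u a
      unfolding c_def by (rule cSup_upper[OF _ Sbdd]) (use that in \<open>auto simp: S_def\<close>)
    have c2: "c \<le> p (v + x0) - b" if "(v, b) \<in> G" for v b
      unfolding c_def by (rule cSup_least[OF Sne]) (use key that in \<open>auto simp: S_def\<close>)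
    define G' where "G' = {(y + rsc t x0, b + t * c) | y b t. (y, b) \<in> G}"
    have GG': "G \<subseteq> G'"
    proof
      fix z assume "z \<in> G"
      moreover obtain y b where "z = (y, b)" by (cases z)
      ultimately have "z = (y + rsc 0 x0, b + 0 * c)" "(y, b) \<in> G" by auto
      then show "z \<in> G'" unfolding G'_def by blast
    qed
    have x0G': "(x0, c) \<in> G'"
    proof -
      have "(x0, c) = (0 + rsc 1 x0, 0 + 1 * c)" by simp
      then show ?thesis unfolding G'_def using g00 by blast
    qed
    have bound: "b + t * c \<le> p (y + rsc t x0)" if yb: "(y, b) \<in> G" for y b t
    proof -
      have yX: "y \<in> X" using gX yb by blast
      consider "t > 0" | "t < 0" | "t = 0" by linarith
      then show ?thesis
      proof cases
        case 1
        have v: "(rsc (inverse t) y, inverse t * b) \<in> G" using gsc[OF yb] .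
        have "c \<le> p (rsc (inverse t) y + x0) - inverse t * b" using c2[OF v] .
        then have "t * c \<le> t * (p (rsc (inverse t) y + x0) - inverse t * b)"
          using 1 by (intro mult_left_mono) auto
        also have "\<dots> = t * p (rsc (inverse t) y + x0) - b" using 1 by (simp add: right_diff_distrib)
        finally have f1: "t * c \<le> t * p (rsc (inverse t) y + x0) - b" .
        have f2: "t * p (rsc (inverse t) y + x0) = p (rsc t (rsc (inverse t) y + x0))"
          using phom[OF Xadd[OF Xsc[OF yX] x0X], of t] 1 by simp
        have f3: "rsc t (rsc (inverse t) y + x0) = y + rsc t x0" using 1 by (simp add: scale_add)
        show ?thesis using f1 unfolding f2 f3 by simp
      next
        case 2
        define s where "s = - t"
        have s: "s > 0" using 2 by (simp add: s_def)
        have u: "(rsc (inverse s) y, inverse s * b) \<in> G" using gsc[OF yb] .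
        have "inverse s * b - p (rsc (inverse s) y - x0) \<le> c" using c1[OF u] .
        then have "s * (inverse s * b - p (rsc (inverse s) y - x0)) \<le> s * c"
          using s by (intro mult_left_mono) auto
        then have f1: "b - s * p (rsc (inverse s) y - x0) \<le> s * c" using s by (simp add: algebra_simps)
        have f2: "s * p (rsc (inverse s) y - x0) = p (rsc s (rsc (inverse s) y - x0))"
          using phom[OF Xdiff[OF Xsc[OF yX] x0X], of s] s by simp
        have f3: "rsc s (rsc (inverse s) y - x0) = y + rsc t x0"
          using s by (simp add: seq_scale_def fun_eq_iff s_def algebra_simps)
        show ?thesis using f1 unfolding f2 f3 by (simp add: s_def)
      next
        case 3
        then show ?thesis using gp[OF yb] by simp
      qed
    qed
    have "G' \<in> A" unfolding A_def hbgood_def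
    proof (intro CollectI conjI allI impI ballI)
      fix z a assume "(z, a) \<in> G'"
      then obtain y b t where e: "z = y + rsc t x0" "a = b + t * c" "(y, b) \<in> G" unfolding G'_def by blast
      have "y \<in> X" using e gX by blast
      then show "z \<in> X" using e(1) Xadd Xsc x0X by blast
    next
      fix z a assume "(z, a) \<in> G'"
      then obtain y b t where e: "z = y + rsc t x0" "a = b + t * c" "(y, b) \<in> G" unfolding G'_def by blast
      show "a \<le> p z" using bound[OF e(3), of t] e by simp
    next
      fix z a a' assume "(z, a) \<in> G'" "(z, a') \<in> G'"
      then obtain y b t y' b' t' where e: "z = y + rsc t x0" "a = b + t * c" "(y, b) \<in> G"
        "z = y' + rsc t' x0" "a' = b' + t' * c" "(y', b') \<in> G" unfolding G'_def by blast
      have tt: "t = t'"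
      proof (rule ccontr)
        assume ne: "t \<noteq> t'"
        have "(y' + - y, b' + - b) \<in> G" using gadd[OF e(6) gneg[OF e(3)]] .
        then have "(rsc (inverse (t - t')) (y' + - y), inverse (t - t') * (b' + - b)) \<in> G" by (rule gsc)
        moreover have "y' - y = rsc (t - t') x0" using e(1) e(4) by (simp add: scale_diff2 algebra_simps)
        then have "rsc (inverse (t - t')) (y' + - y) = x0" using ne by simp
        ultimately show False using nd x0_def by auto
      qed
      then have "y = y'" using e(1) e(4) by simp
      then have "b = b'" using gfun e(3) e(6) by blast
      then show "a = a'" using e tt by simp
    next
      fix z a w d assume "(z, a) \<in> G'" "(w, d) \<in> G'"
      then obtain y b t y' b' t' where e: "z = y + rsc t x0" "a = b + t * c" "(y, b) \<in> G"
        "w = y' + rsc t' x0" "d = b' + t' * c" "(y', b') \<in> G" unfolding G'_def by blast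
      have "(y + y', b + b') \<in> G" using gadd e by blast
      moreover have "z + w = (y + y') + rsc (t + t') x0" using e by (simp add: scale_add2 algebra_simps)
      moreover have "a + d = (b + b') + (t + t') * c" using e by (simp add: algebra_simps)
      ultimately show "(z + w, a + d) \<in> G'" unfolding G'_def by blast
    next
      fix z a s assume "(z, a) \<in> G'"
      then obtain y b t where e: "z = y + rsc t x0" "a = b + t * c" "(y, b) \<in> G" unfolding G'_def by blast
      have "(rsc s y, s * b) \<in> G" using gsc e by blast
      moreover have "rsc s z = rsc s y + rsc (s * t) x0" using e by (simp add: scale_add)
      moreover have "s * a = s * b + (s * t) * c" using e by (simp add: algebra_simps)
      ultimately show "(rsc s z, s * a) \<in> G'" unfolding G'_def by blast
    next
      fix z assume "z \<in> M"
      then show "(z, h z) \<in> G'" using GG' gM by blast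
    qed
    then have "G' = G" using maxG GG' by blast
    then show False using x0G' nd x0_def by auto
  qed
  define H where "H x = (THE a. (x, a) \<in> G)" for x
  have HG: "(x, H x) \<in> G" if "x \<in> X" for x
    unfolding H_def using dom[OF that] gfun by (metis theI)
  have Hval: "H x = a" if "(x, a) \<in> G" for x a
    using HG[OF gX[OF that]] that gfun by blast
  show ?thesis
  proof (intro exI[of _ H] conjI ballI allI)
    fix x y assume "x \<in> X" "y \<in> X"
    then show "H (x + y) = H x + H y" using Hval gadd HG by blast
  next
    fix t x assume "x \<in> X"
    then show "H (rsc t x) = t * H x" using Hval gsc HG by blast
  next
    fix x assume "x \<in> M"
    then show "H x = h x" using Hval gM by blast
  next
    fix x assume "x \<in> X"
    then show "H x \<le> p x" using gp HG by blast
  qed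
qed


lemma hb_complex:
  assumes sub: "cvec_subspace X"
    and padd: "\<And>x y. x \<in> X \<Longrightarrow> y \<in> X \<Longrightarrow> p (x + y) \<le> p x + p y"
    and psc: "\<And>c x. x \<in> X \<Longrightarrow> p (seq_scale c x) = cmod c * p x"
    and MX: "M \<subseteq> X" and M0: "0 \<in> M"
    and Madd: "\<And>x y. x \<in> M \<Longrightarrow> y \<in> M \<Longrightarrow> x + y \<in> M"
    and Msc: "\<And>c x. x \<in> M \<Longrightarrow> seq_scale c x \<in> M"
    and gadd: "\<And>x y. x \<in> M \<Longrightarrow> y \<in> M \<Longrightarrow> g (x + y) = g x + g y"
    and gsc: "\<And>c x. x \<in> M \<Longrightarrow> g (seq_scale c x) = c * g x"
    and gp: "\<And>x. x \<in> M \<Longrightarrow> cmod (g x) \<le> p x"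
  shows "\<exists>F. (\<forall>x\<in>X. \<forall>y\<in>X. F (x + y) = F x + F y) \<and> (\<forall>c. \<forall>x\<in>X. F (seq_scale c x) = c * F x) \<and>
    (\<forall>x\<in>M. F x = g x) \<and> (\<forall>x\<in>X. cmod (F x) \<le> p x)"
proof -
  note Xadd = subspace_facts(2)[OF sub] and Xsc = subspace_facts(3)[OF sub]
  have "\<exists>H. (\<forall>x\<in>X. \<forall>y\<in>X. H (x + y) = H x + H y) \<and> (\<forall>t. \<forall>x\<in>X. H (rsc t x) = t * H x) \<and>
    (\<forall>x\<in>M. H x = Re (g x)) \<and> (\<forall>x\<in>X. H x \<le> p x)"
  proof (rule hb_real[OF sub padd _ MX M0 Madd])
    show "p (rsc t x) = t * p x" if "x \<in> X" "t \<ge> 0" for t x using psc[OF that(1)] that(2) by simp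
    show "rsc t x \<in> M" if "x \<in> M" for t x using Msc[OF that] .
    show "Re (g (x + y)) = Re (g x) + Re (g y)" if "x \<in> M" "y \<in> M" for x y using gadd[OF that] by simp
    show "Re (g (rsc t x)) = t * Re (g x)" if "x \<in> M" for t x using gsc[OF that] by simp
    show "Re (g x) \<le> p x" if "x \<in> M" for x using gp[OF that] complex_Re_le_cmod[of "g x"] by linarith
  qed (simp_all)
  then obtain H where Hadd: "\<And>x y. x \<in> X \<Longrightarrow> y \<in> X \<Longrightarrow> H (x + y) = H x + H y"
    and Hsc: "\<And>t x. x \<in> X \<Longrightarrow> H (rsc t x) = t * H x"
    and HM: "\<And>x. x \<in> M \<Longrightarrow> H x = Re (g x)" and Hp: "\<And>x. x \<in> X \<Longrightarrow> H x \<le> p x" by blast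
  have decomp: "seq_scale c x = rsc (Re c) x + rsc (Im c) (seq_scale \<i> x)" for c x
  proof (rule ext)
    fix i
    have "c * x i = complex_of_real (Re c) * x i + complex_of_real (Im c) * (\<i> * x i)"
      by (simp add: complex_eq_iff)
    then show "seq_scale c x i = (rsc (Re c) x + rsc (Im c) (seq_scale \<i> x)) i"
      by (simp add: seq_scale_def)
  qed
  have HC: "H (seq_scale c x) = Re c * H x + Im c * H (seq_scale \<i> x)" if x: "x \<in> X" for c x
    using Hadd[OF Xsc[OF x] Xsc[OF Xsc[OF x]]] Hsc[OF x] Hsc[OF Xsc[OF x]] by (simp only: decomp[of c x])
  define F where "F x = complex_of_real (H x) - \<i> * complex_of_real (H (seq_scale \<i> x))" for x
  have ReF: "Re (F x) = H x" for x by (simp add: F_def)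
  have Fadd: "F (x + y) = F x + F y" if "x \<in> X" "y \<in> X" for x y
  proof -
    have "H (seq_scale \<i> (x + y)) = H (seq_scale \<i> x) + H (seq_scale \<i> y)"
      unfolding scale_add using Hadd Xsc that by blast
    then show ?thesis using Hadd[OF that] by (simp add: F_def algebra_simps)
  qed
  have Fsc: "F (seq_scale c x) = c * F x" if x: "x \<in> X" for c x
  proof -
    have h1: "H (seq_scale c x) = Re c * H x + Im c * H (seq_scale \<i> x)" using HC[OF x] .
    have "H (seq_scale \<i> (seq_scale c x)) = H (seq_scale (\<i> * c) x)" by simp
    also have "\<dots> = - Im c * H x + Re c * H (seq_scale \<i> x)" using HC[OF x, of "\<i> * c"] by simp
    finally have h2: "H (seq_scale \<i> (seq_scale c x)) = - Im c * H x + Re c * H (seq_scale \<i> x)" .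
    show ?thesis unfolding F_def h1 h2 by (simp add: complex_eq_iff algebra_simps)
  qed
  have FM: "F x = g x" if x: "x \<in> M" for x
  proof -
    have "H (seq_scale \<i> x) = Re (g (seq_scale \<i> x))" using HM Msc[OF x] by blast
    also have "\<dots> = - Im (g x)" using gsc[OF x, of \<i>] by simp
    finally have "H (seq_scale \<i> x) = - Im (g x)" .
    then show ?thesis using HM[OF x] by (simp add: F_def complex_eq_iff)
  qed
  have p0: "p 0 = 0" using psc[OF subspace_facts(1)[OF sub], of 0] by simp
  have pnn: "0 \<le> p x" if x: "x \<in> X" for x
  proof -
    have "p (x + seq_scale (-1) x) \<le> p x + p (seq_scale (-1) x)" using padd x Xsc by blast
    then show ?thesis using psc[OF x, of "-1"] p0 by (simp add: scale_m1)
  qed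
  have Fb: "cmod (F x) \<le> p x" if x: "x \<in> X" for x
  proof (cases "F x = 0")
    case True then show ?thesis using pnn[OF x] by simp
  next
    case False
    define u where "u = cnj (F x) / complex_of_real (cmod (F x))"
    have u1: "cmod u = 1" using False by (simp add: u_def norm_divide)
    have "F (seq_scale u x) = u * F x" using Fsc[OF x] .
    also have "\<dots> = complex_of_real (cmod (F x))"
      using False by (simp add: u_def complex_norm_square[symmetric] power2_eq_square field_simps mult.commute)
    finally have "cmod (F x) = H (seq_scale u x)" using ReF[of "seq_scale u x"] by simp
    also have "\<dots> \<le> p (seq_scale u x)" using Hp Xsc[OF x] by blast
    also have "\<dots> = p x" using psc[OF x] u1 by simp
    finally show ?thesis .
  qed
  show ?thesis using Fadd Fsc FM Fb by blast
qed

lemma sum_fun_app: "(sum f F) i = (\<Sum>x\<in>F. f x i)" for f :: "'a \<Rightarrow> cseq"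
proof (cases "finite F")
  case True then show ?thesis by (induction F rule: finite_induct) auto
next
  case False then show ?thesis by simp
qed

lemma sum_delta: "finite F \<Longrightarrow> (\<Sum>j\<in>F. c j * delta j i) = (if i \<in> F then c i else 0)"
proof -
  assume F: "finite F"
  have "(\<Sum>j\<in>F. c j * delta j i) = (\<Sum>j\<in>F. if i = j then c j else 0)"
    by (rule sum.cong) (auto simp: delta_def)
  also have "\<dots> = (if i \<in> F then c i else 0)" using F by (rule sum.delta')
  finally show ?thesis .
qed

lemma delta_phi: "delta j \<in> phi"
  unfolding phi_def by (rule CollectI, rule exI[of _ "{j}"], rule exI[of _ "\<lambda>_. 1"]) simp

lemma phi_iff: "x \<in> phi \<longleftrightarrow> (\<exists>m. \<forall>i\<ge>m. x i = 0)"
proof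
  assume "x \<in> phi"
  then obtain F c where F: "finite F" "x = (\<lambda>i. \<Sum>j\<in>F. c j * delta j i)" unfolding phi_def by blast
  obtain m where m: "F \<subseteq> {..<m}" using finite_nat_bounded[OF F(1)] by blast
  have "x i = 0" if "i \<ge> m" for i
  proof -
    have "i \<notin> F" using m that by auto
    then show ?thesis using F sum_delta[OF F(1), of c i] by simp
  qed
  then show "\<exists>m. \<forall>i\<ge>m. x i = 0" by blast
next
  assume "\<exists>m. \<forall>i\<ge>m. x i = 0"
  then obtain m where m: "\<And>i. i \<ge> m \<Longrightarrow> x i = 0" by blast
  have xe: "x = (\<lambda>i. \<Sum>j\<in>{..<m}. x j * delta j i)"
  proof
    fix i show "x i = (\<Sum>j\<in>{..<m}. x j * delta j i)"
      using sum_delta[of "{..<m}" x i] m[of i] by (cases "i < m") auto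
  qed
  show "x \<in> phi" unfolding phi_def by (rule CollectI, rule exI[of _ "{..<m}"], rule exI[of _ x]) (use xe in simp)
qed

lemma phi_expand:
  assumes "\<And>i. i \<ge> m \<Longrightarrow> z i = 0"
  shows "z = (\<Sum>i<m. seq_scale (z i) (delta i))"
proof
  fix j
  have "(\<Sum>i<m. seq_scale (z i) (delta i)) j = (\<Sum>i<m. z i * delta i j)"
    by (simp add: sum_fun_app scale_apply)
  also have "\<dots> = (if j \<in> {..<m} then z j else 0)" by (rule sum_delta) simp
  also have "\<dots> = z j" using assms[of j] by auto
  finally show "z j = (\<Sum>i<m. seq_scale (z i) (delta i)) j" by simp
qed

lemma sect_eq: "sect k x i = (if i < k then x i else 0)"
  unfolding sect_def using sum_delta[of "{..<k}" x i] by simp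

definition wt :: "(nat \<Rightarrow> nat) \<Rightarrow> (nat \<Rightarrow> nat) \<Rightarrow> nat \<Rightarrow> nat \<Rightarrow> real" where
  "wt p q n i = real (card {k\<in>{p n<..q n}. i < k}) / real (q n - p n)"

lemma Tmean_eq: "Tmean p q n x = (\<lambda>i. complex_of_real (wt p q n i) * x i)"
proof
  fix i
  have "(\<Sum>k\<in>{p n<..q n}. sect k x i) = (\<Sum>k\<in>{p n<..q n}. if i < k then x i else 0)"
    by (simp add: sect_eq)
  also have "\<dots> = (\<Sum>k\<in>{k\<in>{p n<..q n}. i < k}. x i)"
    by (rule sum.inter_filter[symmetric]) simp
  also have "\<dots> = of_nat (card {k\<in>{p n<..q n}. i < k}) * x i" by simp
  finally show "Tmean p q n x i = complex_of_real (wt p q n i) * x i"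
    by (simp add: Tmean_def wt_def)
qed

locale fkpq = fks +
  fixes p q :: "nat \<Rightarrow> nat"
  assumes phiX: "phi \<subseteq> X" and pq: "\<And>n. p n < q n" and qinf: "filterlim q at_top sequentially"
begin

abbreviation "TT n x \<equiv> Tmean p q n x"
abbreviation "w n i \<equiv> wt p q n i"

lemma card_good: "i < q n \<Longrightarrow> card {k\<in>{p n<..q n}. i < k} = q n - max (p n) i"
proof -
  assume "i < q n"
  have "{k\<in>{p n<..q n}. i < k} = {max (p n) i<..q n}" by auto
  then show ?thesis by simp
qed

lemma wt_nonneg: "0 \<le> w n i" by (simp add: wt_def)

lemma wt_le1: "w n i \<le> 1"
proof -
  have "card {k\<in>{p n<..q n}. i < k} \<le> card {p n<..q n}" by (rule card_mono) auto
  then have "real (card {k\<in>{p n<..q n}. i < k}) \<le> real (q n - p n)" by simp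
  moreover have "real (q n - p n) > 0" using pq[of n] by simp
  ultimately show ?thesis by (simp add: wt_def)
qed

lemma wt_zero: "i \<ge> q n \<Longrightarrow> w n i = 0"
proof -
  assume "i \<ge> q n"
  then have "{k\<in>{p n<..q n}. i < k} = {}" by auto
  then show ?thesis by (simp add: wt_def)
qed

lemma wt_close: assumes "i < q n" shows "1 - w n i \<le> real i / real (q n - i)"
proof -
  have qp: "real (q n - p n) > 0" using pq[of n] by simp
  have w: "w n i = real (q n - max (p n) i) / real (q n - p n)" using card_good[OF assms] by (simp add: wt_def)
  show ?thesis
  proof (cases "p n \<ge> i")
    case True
    then have "w n i = 1" using w qp by (simp add: max_def)
    then show ?thesis by simp
  next
    case False
    then have "w n i = real (q n - i) / real (q n - p n)" using w by (simp add: max_def)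
    then have "1 - w n i = (real (q n - p n) - real (q n - i)) / real (q n - p n)" using qp by (simp add: field_simps)
    also have "real (q n - p n) - real (q n - i) = real i - real (p n)" using False assms pq[of n] by (simp add: of_nat_diff)
    also have "(real i - real (p n)) / real (q n - p n) \<le> real i / real (q n - p n)" using qp by (simp add: divide_right_mono)
    also have "\<dots> \<le> real i / real (q n - i)"
      using False assms by (intro divide_left_mono) (auto simp: of_nat_diff)
    finally show ?thesis .
  qed
qed

lemma wt_lim: "(\<lambda>n. w n i) \<longlonglongrightarrow> 1"
proof (rule tendsto_sandwich[of "\<lambda>n. 1 - real i / real (q n - i)" _ _ "\<lambda>n. 1"])
  have "eventually (\<lambda>n. Suc i \<le> q n) sequentially"
    using qinf by (simp add: filterlim_at_top)
  then have ev: "eventually (\<lambda>n. q n > i) sequentially"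
    by (rule eventually_mono) (simp add: Suc_le_eq)
  show "eventually (\<lambda>n. 1 - real i / real (q n - i) \<le> w n i) sequentially"
    using ev by eventually_elim (use wt_close in force)
  show "eventually (\<lambda>n. w n i \<le> 1) sequentially" using wt_le1 by simp
  show "(\<lambda>n. 1::real) \<longlonglongrightarrow> 1" by simp
  have "filterlim (\<lambda>n. q n - i) at_top sequentially"
    by (rule filterlim_compose[OF filterlim_minus_const_nat_at_top qinf])
  then have "filterlim (\<lambda>n. real (q n - i)) at_top sequentially"
    by (rule filterlim_compose[OF filterlim_real_sequentially])
  then have "(\<lambda>n. real i / real (q n - i)) \<longlonglongrightarrow> 0"
    by (intro tendsto_divide_0[OF tendsto_const] filterlim_at_top_imp_at_infinity)
  then show "(\<lambda>n. 1 - real i / real (q n - i)) \<longlonglongrightarrow> 1"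
    using tendsto_diff[OF tendsto_const[of 1]] by fastforce
qed

lemma TT_phi: "TT n x \<in> phi"
  unfolding phi_iff Tmean_eq using wt_zero by auto

lemma TT_X: "TT n x \<in> X" using TT_phi phiX by blast

lemma TT_add: "TT n (x + y) = TT n x + TT n y"
  by (simp add: Tmean_eq fun_eq_iff algebra_simps)

lemma TT_scale: "TT n (seq_scale c x) = seq_scale c (TT n x)"
  by (simp add: Tmean_eq fun_eq_iff scale_apply algebra_simps)

lemma TT_diff: "TT n (x - y) = TT n x - TT n y"
  by (simp add: Tmean_eq fun_eq_iff algebra_simps)

lemma delta_X: "delta i \<in> X" using delta_phi phiX by blast

lemma nu_sum: "finite F \<Longrightarrow> (\<And>i. i \<in> F \<Longrightarrow> f i \<in> X) \<Longrightarrow> nu k (sum f F) \<le> (\<Sum>i\<in>F. nu k (f i))"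
proof (induction F rule: finite_induct)
  case empty then show ?case by (simp only: sum.empty nu_zero order_refl)
next
  case (insert a F)
  have "sum f F \<in> X" using subspace_sum[OF sub insert(1)] insert(4) by blast
  then have "nu k (f a + sum f F) \<le> nu k (f a) + nu k (sum f F)" using nu_tri insert(4) by blast
  also have "\<dots> \<le> nu k (f a) + (\<Sum>i\<in>F. nu k (f i))" using insert by simp
  finally have c: "nu k (f a + sum f F) \<le> nu k (f a) + (\<Sum>i\<in>F. nu k (f i))" .
  have e1: "sum f (insert a F) = f a + sum f F" using insert(1,2) by (rule sum.insert)
  have e2: "(\<Sum>i\<in>insert a F. nu k (f i)) = nu k (f a) + (\<Sum>i\<in>F. nu k (f i))"
    using insert(1,2) by (rule sum.insert)
  show ?case unfolding e1 e2 by (rule c)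
qed

definition cb :: "nat \<Rightarrow> nat" where "cb j = (SOME k. \<forall>z\<in>X. cmod (z j) \<le> nu k z)"

lemma cb: "z \<in> X \<Longrightarrow> cmod (z j) \<le> nu (cb j) z"
  using someI_ex[OF coord_bound[of j]] unfolding cb_def by blast

lemma TT_bound: "\<exists>K C. C \<ge> 0 \<and> (\<forall>x\<in>X. nu k (TT n x) \<le> C * nu K x)"
proof -
  define K where "K = (\<Sum>i<q n. cb i)"
  define C where "C = (\<Sum>i<q n. nu k (delta i))"
  have C0: "C \<ge> 0" unfolding C_def using nu_nonneg[OF delta_X] by (simp add: sum_nonneg)
  have "nu k (TT n x) \<le> C * nu K x" if x: "x \<in> X" for x
  proof -
    have "TT n x = (\<Sum>i<q n. seq_scale (TT n x i) (delta i))"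
      by (rule phi_expand) (simp add: Tmean_eq wt_zero)
    then have "nu k (TT n x) \<le> (\<Sum>i<q n. nu k (seq_scale (TT n x i) (delta i)))"
      using nu_sum[of "{..<q n}" "\<lambda>i. seq_scale (TT n x i) (delta i)" k] Xscale delta_X by simp
    also have "\<dots> = (\<Sum>i<q n. cmod (TT n x i) * nu k (delta i))" using nu_scale[OF delta_X] by simp
    also have "\<dots> \<le> (\<Sum>i<q n. nu K x * nu k (delta i))"
    proof (rule sum_mono)
      fix i assume "i \<in> {..<q n}"
      have "cmod (TT n x i) = w n i * cmod (x i)" by (simp add: Tmean_eq norm_mult wt_nonneg)
      also have "\<dots> \<le> cmod (x i)" using wt_le1 wt_nonneg by (simp add: mult_left_le_one_le)
      also have "\<dots> \<le> nu (cb i) x" using cb x by blast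
      also have "\<dots> \<le> nu K x" unfolding K_def using \<open>i \<in> {..<q n}\<close> x
        by (intro nu_mono) (auto intro: member_le_sum)
      finally show "cmod (TT n x i) * nu k (delta i) \<le> nu K x * nu k (delta i)"
        using nu_nonneg[OF delta_X] by (intro mult_right_mono) auto
    qed
    also have "\<dots> = C * nu K x" unfolding C_def sum_distrib_right by (rule sum.cong) (simp_all add: mult.commute)
    finally show ?thesis .
  qed
  then show ?thesis using C0 by blast
qed

lemma phi_DS: "phi \<subseteq> DS p q X T"
proof
  fix x assume x: "x \<in> phi"
  then obtain m where m: "\<And>i. i \<ge> m \<Longrightarrow> x i = 0" unfolding phi_iff by blast
  have xX: "x \<in> X" using x phiX by blast
  have "\<forall>k e. e > 0 \<longrightarrow> eventually (\<lambda>n. nu k (TT n x - x) < e) sequentially"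
  proof (intro allI impI)
    fix k and e :: real assume e: "e > 0"
    have eq: "TT n x - x = (\<Sum>i<m. seq_scale ((complex_of_real (w n i) - 1) * x i) (delta i))" for n
    proof -
      have "TT n x - x = (\<lambda>i. (complex_of_real (w n i) - 1) * x i)"
        by (simp add: Tmean_eq fun_eq_iff algebra_simps)
      also have "\<dots> = (\<Sum>i<m. seq_scale ((complex_of_real (w n i) - 1) * x i) (delta i))"
        by (rule phi_expand) (simp add: m)
      finally show ?thesis .
    qed
    have bd: "nu k (TT n x - x) \<le> (\<Sum>i<m. cmod (complex_of_real (w n i) - 1) * cmod (x i) * nu k (delta i))" for n
    proof -
      have "nu k (TT n x - x) \<le> (\<Sum>i<m. nu k (seq_scale ((complex_of_real (w n i) - 1) * x i) (delta i)))"
        unfolding eq by (rule nu_sum) (auto intro: Xscale delta_X)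
      also have "\<dots> = (\<Sum>i<m. cmod (complex_of_real (w n i) - 1) * cmod (x i) * nu k (delta i))"
        using nu_scale[OF delta_X] by (simp add: norm_mult)
      finally show ?thesis .
    qed
    have "(\<lambda>n. \<Sum>i<m. cmod (complex_of_real (w n i) - 1) * cmod (x i) * nu k (delta i)) \<longlonglongrightarrow>
        (\<Sum>i<m. cmod (complex_of_real 1 - 1) * cmod (x i) * nu k (delta i))"
      by (intro tendsto_intros tendsto_of_real wt_lim)
    then have "(\<lambda>n. \<Sum>i<m. cmod (complex_of_real (w n i) - 1) * cmod (x i) * nu k (delta i)) \<longlonglongrightarrow> 0"
      by simp
    then have "eventually (\<lambda>n. (\<Sum>i<m. cmod (complex_of_real (w n i) - 1) * cmod (x i) * nu k (delta i)) < e) sequentially"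
      using e by (rule order_tendstoD)
    then show "eventually (\<lambda>n. nu k (TT n x - x) < e) sequentially"
      by eventually_elim (use bd in \<open>meson le_less_trans\<close>)
  qed
  then have "limitin T (\<lambda>n. TT n x) x sequentially" using limit_nu[of "\<lambda>n. TT n x" x] TT_X xX by blast
  then show "x \<in> DS p q X T" using xX by (simp add: DS_def)
qed

end

definition sg :: "complex \<Rightarrow> complex" where "sg z = (if z = 0 then 1 else z / complex_of_real (cmod z))"

lemma sg_norm: "cmod (sg z) = 1"
  by (simp add: sg_def norm_divide)

lemma sg_add: assumes "t \<ge> 0" shows "cmod (s + sg s * complex_of_real t) \<ge> t"
proof (cases "s = 0")
  case True then show ?thesis using assms by (simp add: sg_def)
next
  case False
  have n: "cmod s > 0" using False by simp
  define r where "r = 1 + t / cmod s"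
  have r0: "r \<ge> 0" using assms n by (simp add: r_def)
  have "s + sg s * complex_of_real t = s * complex_of_real r"
    unfolding r_def using False n by (simp add: sg_def field_simps)
  then have "cmod (s + sg s * complex_of_real t) = cmod s * r"
    by (simp only: norm_mult norm_of_real abs_of_nonneg[OF r0])
  also have "\<dots> = cmod s * (1 + t / cmod s)" by (simp add: r_def)
  also have "\<dots> = cmod s + t" using n by (simp add: field_simps)
  finally show ?thesis by simp
qed

primrec cfs :: "(nat \<Rightarrow> cseq \<Rightarrow> complex) \<Rightarrow> (nat \<Rightarrow> cseq) \<Rightarrow> nat \<Rightarrow> nat \<Rightarrow> complex" where
  "cfs F a 0 = (\<lambda>i. 0)"
| "cfs F a (Suc j) = (cfs F a j)(j := complex_of_real ((1/3)^j) * sg (\<Sum>i<j. cfs F a j i * F i (a j)))"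

lemma cfs_stable: "i < j \<Longrightarrow> cfs F a j i = cfs F a (Suc i) i"
proof (induction j)
  case 0 then show ?case by simp
next
  case (Suc j)
  show ?case
  proof (cases "i = j")
    case True then show ?thesis by simp
  next
    case False then have "i < j" using Suc.prems by simp
    then show ?thesis using Suc.IH False by simp
  qed
qed

lemma geom3: "summable (\<lambda>i. (1/3::real)^i)" "(\<Sum>i. (1/3::real)^i) = 3/2"
proof -
  show "summable (\<lambda>i. (1/3::real)^i)" by (rule summable_geometric) simp
  have "(\<Sum>i. (1/3::real)^i) = 1 / (1 - 1/3)" by (rule suminf_geometric) simp
  then show "(\<Sum>i. (1/3::real)^i) = 3/2" by simp
qed

context fkpq begin

abbreviation "Yc \<equiv> T closure_of phi"

lemma Y_X: "Yc \<subseteq> X" using closure_of_subset_topspace[of T phi] top by simp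
lemma Y_closed: "closedin T Yc" by (rule closedin_closure_of)
lemma phi_Y: "phi \<subseteq> Yc" using closure_of_subset[of phi T] phiX top by simp
lemma Y_mem: "y \<in> Yc \<longleftrightarrow> y \<in> X \<and> (\<forall>k e. e > 0 \<longrightarrow> (\<exists>z\<in>phi. nu k (z - y) < e))"
  using closure_nu[OF phiX] by blast

lemma phi_add: "x \<in> phi \<Longrightarrow> y \<in> phi \<Longrightarrow> x + y \<in> phi"
proof -
  assume "x \<in> phi" "y \<in> phi"
  then obtain m1 m2 where "\<And>i. i \<ge> m1 \<Longrightarrow> x i = 0" "\<And>i. i \<ge> m2 \<Longrightarrow> y i = 0" unfolding phi_iff by blast
  then have "\<forall>i\<ge>max m1 m2. (x + y) i = 0" by simp
  then show ?thesis unfolding phi_iff by blast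
qed

lemma phi_scale: "x \<in> phi \<Longrightarrow> seq_scale c x \<in> phi"
proof -
  assume "x \<in> phi"
  then obtain m where "\<And>i. i \<ge> m \<Longrightarrow> x i = 0" unfolding phi_iff by blast
  then have "\<forall>i\<ge>m. seq_scale c x i = 0" by (simp add: scale_apply)
  then show ?thesis unfolding phi_iff by blast
qed

lemma Y0: "0 \<in> Yc"
proof -
  have "(0::cseq) \<in> phi" unfolding phi_iff by simp
  then show ?thesis using phi_Y by blast
qed

lemma Y_add: assumes "y1 \<in> Yc" "y2 \<in> Yc" shows "y1 + y2 \<in> Yc"
proof -
  have X: "y1 \<in> X" "y2 \<in> X" using assms Y_X by blast+
  have "\<exists>z\<in>phi. nu k (z - (y1 + y2)) < e" if e: "e > 0" for k e
  proof -
    obtain z1 where z1: "z1 \<in> phi" "nu k (z1 - y1) < e/2" using assms(1) e unfolding Y_mem by (meson half_gt_zero)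
    obtain z2 where z2: "z2 \<in> phi" "nu k (z2 - y2) < e/2" using assms(2) e unfolding Y_mem by (meson half_gt_zero)
    have zX: "z1 \<in> X" "z2 \<in> X" using z1 z2 phiX by blast+
    have eq: "z1 + z2 - (y1 + y2) = (z1 - y1) + (z2 - y2)" by (simp add: algebra_simps)
    have "nu k (z1 + z2 - (y1 + y2)) \<le> nu k (z1 - y1) + nu k (z2 - y2)"
      unfolding eq by (rule nu_tri[OF Xdiff[OF zX(1) X(1)] Xdiff[OF zX(2) X(2)]])
    then show ?thesis using z1 z2 phi_add by (intro bexI[of _ "z1 + z2"]) auto
  qed
  then show ?thesis unfolding Y_mem using X Xadd by blast
qed

lemma Y_scale: assumes "y \<in> Yc" shows "seq_scale c y \<in> Yc"
proof -
  have X: "y \<in> X" using assms Y_X by blast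
  have "\<exists>z\<in>phi. nu k (z - seq_scale c y) < e" if e: "e > 0" for k e
  proof -
    have "cmod c + 1 > 0" using norm_ge_zero[of c] by linarith
    then have e': "e / (cmod c + 1) > 0" using e by (intro divide_pos_pos)
    obtain z where z: "z \<in> phi" "nu k (z - y) < e / (cmod c + 1)" using assms e' unfolding Y_mem by blast
    have zX: "z \<in> X" using z phiX by blast
    have "nu k (seq_scale c z - seq_scale c y) = cmod c * nu k (z - y)"
      using nu_scale[OF Xdiff[OF zX X], of k c] by (simp add: scale_diff)
    also have "\<dots> \<le> cmod c * (e / (cmod c + 1))" using z(2) by (intro mult_left_mono) auto
    also have "\<dots> < e"
    proof -
      have d: "0 < 1 + cmod c" using norm_ge_zero[of c] by linarith
      have "cmod c < 1 + cmod c" by simp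
      then have "cmod c * e < (1 + cmod c) * e" using e by (intro mult_strict_right_mono)
      then show ?thesis using d by (simp add: field_simps)
    qed
    finally show ?thesis using z phi_scale by (intro bexI[of _ "seq_scale c z"]) auto
  qed
  then show ?thesis unfolding Y_mem using X Xscale by blast
qed

lemma Y_neg: "y \<in> Yc \<Longrightarrow> - y \<in> Yc" using Y_scale[of y "-1"] by (simp add: scale_m1)
lemma Y_diff: "y1 \<in> Yc \<Longrightarrow> y2 \<in> Yc \<Longrightarrow> y1 - y2 \<in> Yc"
  using Y_add[OF _ Y_neg] by (metis diff_conv_add_uminus)

lemma DS_Y: "DS p q X T \<subseteq> Yc"
proof
  fix x assume "x \<in> DS p q X T"
  then have xX: "x \<in> X" and lim: "limitin T (\<lambda>n. TT n x) x sequentially" by (auto simp: DS_def)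
  have "\<exists>z\<in>phi. nu k (z - x) < e" if "e > 0" for k e
  proof -
    have "eventually (\<lambda>n. nu k (TT n x - x) < e) sequentially"
      using lim limit_nu[of "\<lambda>n. TT n x" x] TT_X xX that by blast
    then obtain n where "nu k (TT n x - x) < e" using eventually_sequentially by auto
    then show ?thesis using TT_phi by blast
  qed
  then show "x \<in> Yc" unfolding Y_mem using xX by blast
qed

lemma DS_DW: "DS p q X T \<subseteq> DW p q X T"
proof
  fix x assume "x \<in> DS p q X T"
  then have xX: "x \<in> X" and lim: "limitin T (\<lambda>n. TT n x) x sequentially" by (auto simp: DS_def)
  have "(\<lambda>n. f (TT n x)) \<longlonglongrightarrow> f x" if "f \<in> cdual X T" for f
  proof -
    have "continuous_map T euclidean f" using that by (simp add: cdual_def)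
    from continuous_map_limit[OF this lim] show ?thesis by (simp add: o_def)
  qed
  then show "x \<in> DW p q X T" using xX by (simp add: DW_def)
qed

lemma DW_DF: "DW p q X T \<subseteq> DF p q X T"
  unfolding DW_def DF_def by (auto intro: convergentI)

lemma DF_DB: "DF p q X T \<subseteq> DB p q X T"
proof
  fix x assume x: "x \<in> DF p q X T"
  have "\<exists>M. \<forall>n. norm (f (TT n x)) \<le> M" if "f \<in> cdual X T" for f
  proof -
    have "convergent (\<lambda>n. f (TT n x))" using x that by (simp add: DF_def)
    then have "Bseq (\<lambda>n. f (TT n x))" by (rule convergent_imp_Bseq)
    then show ?thesis unfolding Bseq_def by blast
  qed
  then show "x \<in> DB p q X T" using x by (simp add: DF_def DB_def)
qed

lemma lin_cdual:
  assumes "\<And>x y. x \<in> X \<Longrightarrow> y \<in> X \<Longrightarrow> F (x + y) = F x + F y"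
    and "\<And>c x. x \<in> X \<Longrightarrow> F (seq_scale c x) = c * F x"
    and "\<And>x. x \<in> X \<Longrightarrow> cmod (F x) \<le> C * nu K x"
  shows "F \<in> cdual X T"
  unfolding cdual_def using assms cont_nu[of F C K] by simp

lemma hb_line:
  assumes L0: "0 \<in> L" and LX: "L \<subseteq> X"
    and Ladd: "\<And>x y. x \<in> L \<Longrightarrow> y \<in> L \<Longrightarrow> x + y \<in> L"
    and Lsc: "\<And>c x. x \<in> L \<Longrightarrow> seq_scale c x \<in> L"
    and x0: "x0 \<in> X" "x0 \<notin> L" and C: "C > 0"
    and cond: "\<And>y c. y \<in> L \<Longrightarrow> cmod (c * \<alpha>) \<le> C * nu K (y + seq_scale c x0)"
  shows "\<exists>F. F \<in> cdual X T \<and> (\<forall>x\<in>X. cmod (F x) \<le> C * nu K x) \<and> (\<forall>y\<in>L. F y = 0) \<and> F x0 = \<alpha>"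
proof -
  have uniq: "c = c' \<and> y = y'" if "y \<in> L" "y' \<in> L" "y + seq_scale c x0 = y' + seq_scale c' x0" for y y' c c'
  proof -
    have cc: "c = c'"
    proof (rule ccontr)
      assume ne: "c \<noteq> c'"
      have "seq_scale (c - c') x0 = y' - y" using that(3) by (simp add: scale_diff2 algebra_simps)
      then have "seq_scale (inverse (c - c')) (seq_scale (c - c') x0) = seq_scale (inverse (c - c')) (y' - y)" by simp
      then have "x0 = seq_scale (inverse (c - c')) (y' + - y)" using ne by simp
      moreover have "y' + - y \<in> L"
      proof -
        have ny: "- y \<in> L" using Lsc[OF that(1), of "-1"] by (simp add: scale_m1)
        show ?thesis by (rule Ladd[OF that(2) ny])
      qed
      ultimately show False using Lsc x0(2) by metis
    qed
    then show ?thesis using that(3) by simp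
  qed
  define M where "M = {y + seq_scale c x0 | y c. y \<in> L}"
  define g where "g x = (THE c. \<exists>y\<in>L. x = y + seq_scale c x0) * \<alpha>" for x
  have gval: "g (y + seq_scale c x0) = c * \<alpha>" if "y \<in> L" for y c
  proof -
    have "(THE c'. \<exists>y'\<in>L. y + seq_scale c x0 = y' + seq_scale c' x0) = c"
      by (rule the_equality) (use that uniq in \<open>blast+\<close>)
    then show ?thesis by (simp add: g_def)
  qed
  have MX: "M \<subseteq> X" unfolding M_def using LX x0(1) Xadd Xscale by blast
  have M0: "0 \<in> M" unfolding M_def using L0 by (intro CollectI exI[of _ 0] exI[of _ "0::complex"]) simp
  have Madd: "x + y \<in> M" if xyM: "x \<in> M" "y \<in> M" for x y
  proof -
    obtain a c b d where "a \<in> L" "b \<in> L" "x = a + seq_scale c x0" "y = b + seq_scale d x0"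
      using xyM unfolding M_def by blast
    then have "x + y = (a + b) + seq_scale (c + d) x0" "a + b \<in> L"
      using Ladd by (auto simp: scale_add2 algebra_simps)
    then show ?thesis unfolding M_def by blast
  qed
  have Msc: "seq_scale e x \<in> M" if xM: "x \<in> M" for e x
  proof -
    obtain a c where "a \<in> L" "x = a + seq_scale c x0" using xM unfolding M_def by blast
    then have "seq_scale e x = seq_scale e a + seq_scale (e * c) x0" "seq_scale e a \<in> L"
      using Lsc by (auto simp: scale_add)
    then show ?thesis unfolding M_def by blast
  qed
  have gadd: "g (x + y) = g x + g y" if xyM: "x \<in> M" "y \<in> M" for x y
  proof -
    obtain a c b d where abcd: "a \<in> L" "b \<in> L" "x = a + seq_scale c x0" "y = b + seq_scale d x0"
      using xyM unfolding M_def by blast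
    then have eqs: "x + y = (a + b) + seq_scale (c + d) x0" by (simp add: scale_add2 algebra_simps)
    have "g (x + y) = (c + d) * \<alpha>" unfolding eqs by (rule gval[OF Ladd[OF abcd(1,2)]])
    then show ?thesis using gval abcd by (simp add: algebra_simps)
  qed
  have gsc: "g (seq_scale e x) = e * g x" if xM: "x \<in> M" for e x
  proof -
    obtain a c where ac: "a \<in> L" "x = a + seq_scale c x0" using xM unfolding M_def by blast
    then have "seq_scale e x = seq_scale e a + seq_scale (e * c) x0" by (simp add: scale_add)
    then have "g (seq_scale e x) = (e * c) * \<alpha>" using gval Lsc ac by simp
    then show ?thesis using gval ac by simp
  qed
  have gp: "cmod (g x) \<le> C * nu K x" if xM: "x \<in> M" for x
  proof -
    obtain a c where ac: "a \<in> L" "x = a + seq_scale c x0" using xM unfolding M_def by blast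
    then show ?thesis using gval cond by simp
  qed
  have "\<exists>F. (\<forall>x\<in>X. \<forall>y\<in>X. F (x + y) = F x + F y) \<and> (\<forall>c. \<forall>x\<in>X. F (seq_scale c x) = c * F x) \<and>
    (\<forall>x\<in>M. F x = g x) \<and> (\<forall>x\<in>X. cmod (F x) \<le> C * nu K x)"
  proof (rule hb_complex[OF sub _ _ MX M0 Madd Msc gadd gsc gp])
    show "C * nu K (x + y) \<le> C * nu K x + C * nu K y" if "x \<in> X" "y \<in> X" for x y
      using nu_tri[OF that, of K] C by (simp add: distrib_left[symmetric])
    show "C * nu K (seq_scale c x) = cmod c * (C * nu K x)" if "x \<in> X" for c x
      using nu_scale[OF that] by simp
  qed (auto)
  then obtain F where Fa: "\<And>x y. x \<in> X \<Longrightarrow> y \<in> X \<Longrightarrow> F (x + y) = F x + F y"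
    and Fs: "\<And>c x. x \<in> X \<Longrightarrow> F (seq_scale c x) = c * F x"
    and FM: "\<And>x. x \<in> M \<Longrightarrow> F x = g x" and Fb: "\<And>x. x \<in> X \<Longrightarrow> cmod (F x) \<le> C * nu K x" by blast
  have "F \<in> cdual X T" by (rule lin_cdual[OF Fa Fs Fb])
  moreover have "F y = 0" if "y \<in> L" for y
  proof -
    have "y = y + seq_scale 0 x0" by simp
    then have "y \<in> M" using that unfolding M_def by blast
    then show ?thesis using FM gval[OF that, of 0] by simp
  qed
  moreover have "F x0 = \<alpha>"
  proof -
    have "x0 = 0 + seq_scale 1 x0" by simp
    then have "x0 \<in> M" using L0 unfolding M_def by blast
    then show ?thesis using FM gval[OF L0, of 1] by simp
  qed
  ultimately show ?thesis using Fb by blast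
qed

lemma DW_Y: "DW p q X T \<subseteq> Yc"
proof
  fix x assume xW: "x \<in> DW p q X T"
  then have xX: "x \<in> X" by (simp add: DW_def)
  show "x \<in> Yc"
  proof (rule ccontr)
    assume nY: "x \<notin> Yc"
    then obtain K e where e: "e > 0" and far: "\<And>z. z \<in> Yc \<Longrightarrow> \<not> nu K (z - x) < e"
      using Y_closed xX unfolding closed_nu by blast
    have cond: "cmod (c * 1) \<le> (1 / e) * nu K (y + seq_scale c x)" if y: "y \<in> Yc" for y c
    proof (cases "c = 0")
      case True then show ?thesis using nu_nonneg Y_X y e by auto
    next
      case False
      define z where "z = seq_scale (- inverse c) y"
      have zY: "z \<in> Yc" using Y_scale y by (simp add: z_def)
      have zX: "z \<in> X" using zY Y_X by blast
      have "y + seq_scale c x = seq_scale c (x - z)" using False by (simp add: z_def scale_diff scale_m1)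
      then have "nu K (y + seq_scale c x) = cmod c * nu K (z - x)"
        using nu_scale[OF Xdiff[OF xX zX]] nu_sym[OF xX zX] by simp
      moreover have "nu K (z - x) \<ge> e" using far[OF zY] by simp
      ultimately have "nu K (y + seq_scale c x) \<ge> cmod c * e" by (simp add: mult_left_mono)
      then show ?thesis using e by (simp add: field_simps)
    qed
    obtain F where F: "F \<in> cdual X T" "\<And>y. y \<in> Yc \<Longrightarrow> F y = 0" "F x = 1"
      using hb_line[OF Y0 Y_X Y_add Y_scale xX nY _ cond] e by auto
    have "(\<lambda>n. F (TT n x)) \<longlonglongrightarrow> F x" using xW F(1) by (simp add: DW_def)
    moreover have "(\<lambda>n. F (TT n x)) = (\<lambda>n. 0)" using F(2) TT_phi phi_Y by blast
    ultimately have "(\<lambda>n. 0::complex) \<longlonglongrightarrow> 1" using F(3) by simp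
    then show False using LIMSEQ_unique[OF tendsto_const] by fastforce
  qed
qed

lemma hb_point: assumes x0: "x0 \<in> X"
  shows "\<exists>F. F \<in> cdual X T \<and> (\<forall>x\<in>X. cmod (F x) \<le> nu K x) \<and> F x0 = complex_of_real (nu K x0)"
proof (cases "nu K x0 = 0")
  case True
  have "(\<lambda>x. 0) \<in> cdual X T" by (rule lin_cdual[of _ 0 K]) simp_all
  then show ?thesis using True nu_nonneg by (intro exI[of _ "\<lambda>x. 0"]) auto
next
  case False
  then have "x0 \<noteq> 0" by auto
  have "\<exists>F. F \<in> cdual X T \<and> (\<forall>x\<in>X. cmod (F x) \<le> 1 * nu K x) \<and> (\<forall>y\<in>{0}. F y = 0) \<and> F x0 = complex_of_real (nu K x0)"
  proof (rule hb_line)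
    show "0 \<in> {0::cseq}" "{0} \<subseteq> X" using X0 by auto
    show "x + y \<in> {0}" if "x \<in> {0}" "y \<in> {0}" for x y :: cseq using that by simp
    show "seq_scale c x \<in> {0}" if "x \<in> {0}" for c x using that by simp
    show "x0 \<in> X" "x0 \<notin> {0}" using x0 \<open>x0 \<noteq> 0\<close> by auto
    show "(1::real) > 0" by simp
    show "cmod (c * complex_of_real (nu K x0)) \<le> 1 * nu K (y + seq_scale c x0)" if "y \<in> {0}" for y c
      using that nu_scale[OF x0, of K c] nu_nonneg[OF x0, of K] by (simp add: norm_mult)
  qed
  then show ?thesis by auto
qed

end

lemma scal_bound:
  fixes a v r M :: real
  assumes a: "a \<ge> 0" and r: "r > 0" and M: "M \<ge> 0"
    and H: "\<And>t. t > 0 \<Longrightarrow> t * a < r \<Longrightarrow> t * v \<le> M"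
  shows "v \<le> (2 * M / r) * a"
proof (rule field_le_epsilon)
  fix e :: real assume e: "e > 0"
  define d where "d = r * e / (2 * M + 1)"
  have d: "d > 0" using r e M by (simp add: d_def)
  define t where "t = r / (2 * a + d)"
  have den: "2 * a + d > 0" using a d by simp
  have t: "t > 0" using r den by (simp add: t_def)
  have "t * a < r"
  proof -
    have "r * a < r * (2 * a + d)" using r a d by (intro mult_strict_left_mono) auto
    then show ?thesis using den by (simp add: t_def field_simps)
  qed
  then have "t * v \<le> M" using H t by blast
  then have "v \<le> M / t" using t by (simp add: field_simps)
  also have "M / t = 2 * M / r * a + M * d / r" using r den by (simp add: t_def field_simps)
  also have "M * d / r \<le> e"
  proof -
    have "M * d / r = M * e / (2 * M + 1)" using r by (simp add: d_def)
    also have "\<dots> \<le> e" using M e by (simp add: field_simps)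
    finally show ?thesis .
  qed
  finally show "v \<le> 2 * M / r * a + e" by simp
qed

context fkpq begin

lemma cdual_facts:
  assumes "F \<in> cdual X T"
  shows "\<And>x y. x \<in> X \<Longrightarrow> y \<in> X \<Longrightarrow> F (x + y) = F x + F y"
    and "\<And>c x. x \<in> X \<Longrightarrow> F (seq_scale c x) = c * F x"
  using assms by (simp_all add: cdual_def)

lemma mackey:
  assumes b: "\<And>n. b n \<in> X"
    and wb: "\<And>f. f \<in> cdual X T \<Longrightarrow> \<exists>M. \<forall>n. cmod (f (b n)) \<le> M"
  shows "\<exists>B. \<forall>n. nu k (b n) \<le> B"
proof (rule ccontr)
  assume nb: "\<nexists>B. \<forall>n. nu k (b n) \<le> B"
  have "\<forall>j. \<exists>n. nu k (b n) \<ge> 2 * 3^j * (real j + 1)"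
    using nb by (meson linorder_not_le less_imp_le)
  then obtain N where N: "\<And>j. nu k (b (N j)) \<ge> 2 * 3^j * (real j + 1)" by metis
  define a where "a j = b (N j)" for j
  have aX: "a j \<in> X" for j using b by (simp add: a_def)
  have "\<forall>j. \<exists>F. F \<in> cdual X T \<and> (\<forall>x\<in>X. cmod (F x) \<le> nu k x) \<and> F (a j) = complex_of_real (nu k (a j))"
    using hb_point aX by blast
  then obtain Fs where Fs: "\<And>j. Fs j \<in> cdual X T" "\<And>j x. x \<in> X \<Longrightarrow> cmod (Fs j x) \<le> nu k x"
    "\<And>j. Fs j (a j) = complex_of_real (nu k (a j))" by metis
  define c where "c i = cfs Fs a (Suc i) i" for i
  have stab: "cfs Fs a j i = c i" if "i < j" for i j using cfs_stable[OF that] by (simp add: c_def)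
  have cdef: "c j = complex_of_real ((1/3)^j) * sg (\<Sum>i<j. c i * Fs i (a j))" for j
  proof -
    have "(\<Sum>i<j. cfs Fs a j i * Fs i (a j)) = (\<Sum>i<j. c i * Fs i (a j))"
      by (rule sum.cong) (simp_all add: stab)
    then show ?thesis by (simp add: c_def)
  qed
  have cn: "cmod (c i) = (1/3)^i" for i
    using cdef[of i] by (simp add: norm_mult sg_norm norm_power)
  have tb: "cmod (c i * Fs i x) \<le> (1/3)^i * nu k x" if "x \<in> X" for i x
    using Fs(2)[OF that, of i] cn[of i] by (simp add: norm_mult mult_left_mono)
  have gs: "summable (\<lambda>i. (1/3::real)^i * nu k x)" for x
    using geom3(1) by (rule summable_mult2)
  have sm: "summable (\<lambda>i. c i * Fs i x)" if "x \<in> X" for x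
    by (rule summable_comparison_test'[OF gs tb[OF that]])
  have smn: "summable (\<lambda>i. cmod (c i * Fs i x))" if "x \<in> X" for x
    by (rule summable_comparison_test'[OF gs]) (use tb[OF that] in simp)
  define f where "f x = (\<Sum>i. c i * Fs i x)" for x
  have fadd: "f (x + y) = f x + f y" if "x \<in> X" "y \<in> X" for x y
  proof -
    have "f (x + y) = (\<Sum>i. c i * Fs i x + c i * Fs i y)"
      unfolding f_def using cdual_facts(1)[OF Fs(1) that] by (simp add: algebra_simps)
    also have "\<dots> = f x + f y" unfolding f_def by (rule suminf_add[symmetric, OF sm sm]) (use that in auto)
    finally show ?thesis .
  qed
  have fsc: "f (seq_scale e x) = e * f x" if "x \<in> X" for e x
  proof -
    have "f (seq_scale e x) = (\<Sum>i. e * (c i * Fs i x))"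
      unfolding f_def using cdual_facts(2)[OF Fs(1) that] by (simp add: algebra_simps)
    also have "\<dots> = e * f x" unfolding f_def by (rule suminf_mult[OF sm[OF that]])
    finally show ?thesis .
  qed
  have fb: "cmod (f x) \<le> 3/2 * nu k x" if x: "x \<in> X" for x
  proof -
    have "cmod (f x) \<le> (\<Sum>i. cmod (c i * Fs i x))" unfolding f_def by (rule summable_norm[OF smn[OF x]])
    also have "\<dots> \<le> (\<Sum>i. (1/3)^i * nu k x)" by (rule suminf_le[OF tb[OF x] smn[OF x] gs])
    also have "\<dots> = (\<Sum>i. (1/3::real)^i) * nu k x" by (rule suminf_mult2[OF geom3(1), symmetric])
    finally show ?thesis using geom3(2) by simp
  qed
  have fd: "f \<in> cdual X T" by (rule lin_cdual[OF fadd fsc fb])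
  have key: "cmod (f (a j)) \<ge> (1/3)^j * nu k (a j) / 2" for j
  proof -
    define g where "g i = c i * Fs i (a j)" for i
    have sg': "summable g" unfolding g_def by (rule sm[OF aX])
    have split: "f (a j) = (\<Sum>i. g (i + Suc j)) + (\<Sum>i<Suc j. g i)"
      unfolding f_def g_def[symmetric] by (rule suminf_split_initial_segment[OF sg'])
    define s where "s = (\<Sum>i<j. g i)"
    have head: "(\<Sum>i<Suc j. g i) = s + sg s * complex_of_real ((1/3)^j * nu k (a j))"
      by (simp add: s_def g_def cdef[of j] Fs(3))
    have h1: "cmod (\<Sum>i<Suc j. g i) \<ge> (1/3)^j * nu k (a j)"
      unfolding head by (rule sg_add) (use nu_nonneg[OF aX] in simp)
    have tail: "cmod (\<Sum>i. g (i + Suc j)) \<le> (1/3)^j * nu k (a j) / 2"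
    proof -
      have sn: "summable (\<lambda>i. cmod (g (i + Suc j)))"
        using summable_ignore_initial_segment[OF smn[OF aX[of j]], of "Suc j"] by (simp add: g_def)
      have gs2: "summable (\<lambda>i. (1/3::real)^(i + Suc j) * nu k (a j))"
        using summable_ignore_initial_segment[OF gs[of "a j"], of "Suc j"] by simp
      have "cmod (\<Sum>i. g (i + Suc j)) \<le> (\<Sum>i. cmod (g (i + Suc j)))" by (rule summable_norm[OF sn])
      also have "\<dots> \<le> (\<Sum>i. (1/3::real)^(i + Suc j) * nu k (a j))"
        by (rule suminf_le[OF _ sn gs2]) (unfold g_def, rule tb[OF aX])
      also have "(\<Sum>i. (1/3::real)^(i + Suc j) * nu k (a j)) = (\<Sum>i. (1/3::real)^i) * ((1/3)^(Suc j) * nu k (a j))"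
        by (subst suminf_mult2[OF geom3(1)]) (simp add: power_add mult.assoc)
      also have "\<dots> = (1/3)^j * nu k (a j) / 2" using geom3(2) by simp
      finally show ?thesis .
    qed
    have "cmod (\<Sum>i<Suc j. g i) - cmod (\<Sum>i. g (i + Suc j)) \<le> cmod (f (a j))"
      unfolding split by (metis add.commute norm_diff_ineq)
    then show ?thesis using h1 tail by linarith
  qed
  obtain M where M: "\<And>n. cmod (f (b n)) \<le> M" using wb[OF fd] by blast
  obtain j :: nat where j: "real j > M" using reals_Archimedean2 by blast
  have "(1/3)^j * nu k (a j) / 2 \<ge> (1/3)^j * (2 * 3^j * (real j + 1)) / 2"
    using N[of j] by (intro divide_right_mono mult_left_mono) (auto simp: a_def)
  also have "(1/3::real)^j * (2 * 3^j * (real j + 1)) / 2 = real j + 1"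
    by (simp add: power_one_over field_simps)
  finally have "cmod (f (a j)) \<ge> real j + 1" using key[of j] by linarith
  moreover have "cmod (f (a j)) \<le> M" using M by (simp add: a_def)
  ultimately show False using j by linarith
qed

lemma baire:
  fixes A :: "nat \<Rightarrow> cseq set"
  assumes S: "closedin T S" and s0: "s0 \<in> S"
    and Acl: "\<And>m. closedin T (A m)" and cover: "S \<subseteq> (\<Union>m. A m)"
  shows "\<exists>m y0 K r. r > 0 \<and> y0 \<in> S \<and> (\<forall>y\<in>S. nu K (y - y0) < r \<longrightarrow> y \<in> A m)"
proof (rule ccontr)
  assume "\<not> ?thesis"
  then have H: "\<And>m y0 K r. r > 0 \<Longrightarrow> y0 \<in> S \<Longrightarrow> \<exists>y\<in>S. nu K (y - y0) < r \<and> y \<notin> A m" by blast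
  have SX: "S \<subseteq> X" using S closed_nu by blast
  have step: "\<exists>y1 K1 r1. y1 \<in> S \<and> K1 \<ge> K \<and> K1 \<ge> Suc m \<and> r1 > 0 \<and> r1 \<le> r / 2 \<and>
      (\<forall>y\<in>X. nu K1 (y - y1) \<le> 2 * r1 \<longrightarrow> nu K (y - y0) < r \<and> y \<notin> A m)"
    if y0: "y0 \<in> S" and r: "r > 0" for y0 K r m
  proof -
    obtain y1 where y1: "y1 \<in> S" "nu K (y1 - y0) < r" "y1 \<notin> A m" using H[OF r y0] by blast
    have y1X: "y1 \<in> X" and y0X: "y0 \<in> X" using y1 y0 SX by blast+
    have AX: "A m \<subseteq> X" using Acl closed_nu by blast
    have "\<not> (\<forall>k e. e > 0 \<longrightarrow> (\<exists>z\<in>A m. nu k (z - y1) < e))"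
      using Acl[of m] y1X y1(3) unfolding closed_nu by blast
    then obtain K2 e2 where e2: "e2 > 0" and far: "\<And>z. z \<in> A m \<Longrightarrow> nu K2 (z - y1) \<ge> e2"
      by (meson linorder_not_le)
    define K1 where "K1 = max (max K K2) (Suc m)"
    define r1 where "r1 = min e2 (r - nu K (y1 - y0)) / 4"
    have r1: "r1 > 0" using e2 y1(2) by (simp add: r1_def)
    have r1b: "r1 \<le> r / 2" using nu_nonneg[OF Xdiff[OF y1X y0X], of K] r e2
      by (simp add: r1_def min_def)
    have "nu K (y - y0) < r \<and> y \<notin> A m" if y: "y \<in> X" "nu K1 (y - y1) \<le> 2 * r1" for y
    proof
      have "nu K (y - y1) \<le> nu K1 (y - y1)" by (rule nu_mono) (use Xdiff[OF y(1) y1X] in \<open>auto simp: K1_def\<close>)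
      then have "nu K (y - y1) < r - nu K (y1 - y0)" using y(2) r1 e2 y1(2)
        by (simp add: r1_def min_def split: if_splits)
      moreover have "nu K (y - y0) \<le> nu K (y - y1) + nu K (y1 - y0)" by (rule nu_tri_diff[OF y(1) y1X y0X])
      ultimately show "nu K (y - y0) < r" by linarith
      show "y \<notin> A m"
      proof
        assume "y \<in> A m"
        then have "nu K2 (y - y1) \<ge> e2" using far by blast
        moreover have "nu K2 (y - y1) \<le> nu K1 (y - y1)" by (rule nu_mono) (use Xdiff[OF y(1) y1X] in \<open>auto simp: K1_def\<close>)
        ultimately show False using y(2) r1 e2 by (simp add: r1_def min_def split: if_splits)
      qed
    qed
    moreover have "K1 \<ge> K" "K1 \<ge> Suc m" by (auto simp: K1_def)
    ultimately show ?thesis using y1(1) r1 r1b by blast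
  qed
  define P where "P n st \<longleftrightarrow> fst st \<in> S \<and> snd (snd st) > 0 \<and> snd (snd st) \<le> (1/2)^n \<and> fst (snd st) \<ge> n"
    for n :: nat and st :: "cseq \<times> nat \<times> real"
  define Q where "Q n st st' \<longleftrightarrow> fst (snd st') \<ge> fst (snd st) \<and> snd (snd st') \<le> snd (snd st) / 2 \<and>
      (\<forall>y\<in>X. nu (fst (snd st')) (y - fst st') \<le> 2 * snd (snd st') \<longrightarrow>
          nu (fst (snd st)) (y - fst st) < snd (snd st) \<and> y \<notin> A n)"
    for n :: nat and st st' :: "cseq \<times> nat \<times> real"
  have "\<exists>st. \<forall>n. P n (st n) \<and> Q n (st n) (st (Suc n))"
  proof (rule dependent_nat_choice)
    show "\<exists>x. P 0 x" using s0 by (intro exI[of _ "(s0, 0, 1)"]) (simp add: P_def)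
  next
    fix st n assume Pn: "P n st"
    obtain y0 K r where st: "st = (y0, K, r)" by (cases st) auto
    have y0: "y0 \<in> S" and r: "r > 0" and rb: "r \<le> (1/2)^n" and Kn: "K \<ge> n" using Pn by (auto simp: P_def st)
    obtain y1 K1 r1 where s: "y1 \<in> S" "K1 \<ge> K" "K1 \<ge> Suc n" "r1 > 0" "r1 \<le> r / 2"
      "\<forall>y\<in>X. nu K1 (y - y1) \<le> 2 * r1 \<longrightarrow> nu K (y - y0) < r \<and> y \<notin> A n"
      using step[OF y0 r, of K n] by blast
    have "P (Suc n) (y1, K1, r1)" using s rb by (simp add: P_def)
    moreover have "Q n st (y1, K1, r1)" using s by (simp add: Q_def st)
    ultimately show "\<exists>st'. P (Suc n) st' \<and> Q n st st'" by blast
  qed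
  then obtain st where PQ: "\<And>n. P n (st n)" "\<And>n. Q n (st n) (st (Suc n))" by blast
  define y where "y n = fst (st n)" for n
  define K where "K n = fst (snd (st n))" for n
  define r where "r n = snd (snd (st n))" for n
  have yS: "y n \<in> S" and rpos: "r n > 0" and rb: "r n \<le> (1/2)^n" and Kn: "K n \<ge> n" for n
    using PQ(1)[of n] by (auto simp: P_def y_def r_def K_def)
  have yX: "y n \<in> X" for n using yS SX by blast
  have Kmono: "K n \<le> K (Suc n)" for n using PQ(2)[of n] by (simp add: Q_def K_def)
  have nest: "\<And>z. z \<in> X \<Longrightarrow> nu (K (Suc n)) (z - y (Suc n)) \<le> 2 * r (Suc n) \<Longrightarrow>
      nu (K n) (z - y n) < r n \<and> z \<notin> A n" for n
    using PQ(2)[of n] by (simp add: Q_def K_def y_def r_def)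
  have nest2: "nu (K n) (z - y n) \<le> 2 * r n" if "z \<in> X" "nu (K (n + d)) (z - y (n + d)) \<le> 2 * r (n + d)" for n d z
    using that
  proof (induction d arbitrary: n)
    case 0 then show ?case by simp
  next
    case (Suc d)
    have eqs: "n + Suc d = Suc (n + d)" by simp
    have h: "nu (K (Suc (n + d))) (z - y (Suc (n + d))) \<le> 2 * r (Suc (n + d))"
      using Suc.prems(2) by (simp only: eqs)
    have "nu (K (n + d)) (z - y (n + d)) < r (n + d)" using nest[OF Suc.prems(1) h] by blast
    then have "nu (K (n + d)) (z - y (n + d)) \<le> 2 * r (n + d)" using rpos[of "n + d"] by simp
    then show ?case using Suc.IH Suc.prems(1) by blast
  qed
  have inB: "nu (K n) (y m - y n) \<le> 2 * r n" if nm: "n \<le> m" for n m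
  proof -
    obtain d where d: "m = n + d" using nm le_Suc_ex by blast
    have h: "nu (K (n + d)) (y (n + d) - y (n + d)) \<le> 2 * r (n + d)" using rpos[of "n + d"] by simp
    show ?thesis unfolding d by (rule nest2[OF yX h])
  qed
  have cauchy: "\<exists>N. \<forall>a\<ge>N. \<forall>b\<ge>N. nu j (y a - y b) < e" if e: "e > 0" for j e
  proof -
    obtain n0 where n0: "(1/2::real)^n0 < e / 4" using real_arch_pow_inv[of "e/4" "1/2"] e by auto
    define n where "n = max n0 j"
    have "(1/2::real)^n \<le> (1/2)^n0" by (rule power_decreasing) (auto simp: n_def)
    then have rn: "4 * r n < e" using rb[of n] n0 by linarith
    have "nu j (y a - y b) < e" if ab: "a \<ge> n" "b \<ge> n" for a b
    proof -
      have "nu j (y a - y b) \<le> nu (K n) (y a - y b)"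
        by (rule nu_mono) (use Kn[of n] Xdiff[OF yX yX] in \<open>auto simp: n_def\<close>)
      also have "\<dots> \<le> nu (K n) (y a - y n) + nu (K n) (y n - y b)" by (rule nu_tri_diff[OF yX yX yX])
      also have "nu (K n) (y n - y b) = nu (K n) (y b - y n)" by (rule nu_sym[OF yX yX])
      finally have "nu j (y a - y b) \<le> nu (K n) (y a - y n) + nu (K n) (y b - y n)" .
      then show ?thesis using inB[OF ab(1)] inB[OF ab(2)] rn by linarith
    qed
    then show ?thesis by blast
  qed
  obtain l where lX: "l \<in> X" and lim: "limitin T y l sequentially"
    using complete_nu[OF yX cauchy] by blast
  have LL: "limitin T y l sequentially \<longleftrightarrow> (\<forall>k e. e > 0 \<longrightarrow> eventually (\<lambda>n. nu k (y n - l) < e) sequentially)"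
    by (rule limit_nu[of y l]) (use yX lX in auto)
  have conv: "eventually (\<lambda>m. nu k (y m - l) < e) sequentially" if ep: "e > 0" for k e
    using lim LL ep by blast
  have lS: "l \<in> S"
  proof -
    have "\<exists>z\<in>S. nu k (z - l) < e" if ep: "e > 0" for k e
    proof -
      obtain m where "nu k (y m - l) < e" using conv[OF ep, of k] eventually_sequentially by auto
      then show ?thesis using yS by blast
    qed
    then show ?thesis using S lX unfolding closed_nu by blast
  qed
  have lB: "nu (K n) (l - y n) \<le> 2 * r n" for n
  proof (rule field_le_epsilon)
    fix e :: real assume e: "e > 0"
    obtain m0 where m0: "\<And>m. m \<ge> m0 \<Longrightarrow> nu (K n) (y m - l) < e"
      using conv[OF e, of "K n"] eventually_sequentially by auto
    define m where "m = max m0 n"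
    have t1: "nu (K n) (l - y n) \<le> nu (K n) (l - y m) + nu (K n) (y m - y n)" by (rule nu_tri_diff[OF lX yX yX])
    have t2: "nu (K n) (l - y m) = nu (K n) (y m - l)" by (rule nu_sym[OF lX yX])
    have t3: "nu (K n) (y m - l) < e" by (rule m0) (simp add: m_def)
    have t4: "nu (K n) (y m - y n) \<le> 2 * r n" by (rule inB) (simp add: m_def)
    show "nu (K n) (l - y n) \<le> 2 * r n + e" using t1 t2 t3 t4 by linarith
  qed
  have "l \<notin> A n" for n using nest[OF lX lB[of "Suc n"]] by blast
  then show False using lS cover by blast
qed

lemma equicont:
  assumes YB: "Yc \<subseteq> DB p q X T"
  shows "\<exists>K L. L \<ge> 0 \<and> (\<forall>w\<in>Yc. \<forall>n. nu k (TT n w) \<le> L * nu K w)"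
proof -
  have bdd: "\<exists>B. \<forall>n. nu k (TT n y) \<le> B" if y: "y \<in> Yc" for y
  proof (rule mackey)
    show "TT n y \<in> X" for n by (rule TT_X)
    fix f assume "f \<in> cdual X T"
    then show "\<exists>M. \<forall>n. cmod (f (TT n y)) \<le> M" using YB y by (auto simp: DB_def)
  qed
  define A where "A m = {y\<in>X. \<forall>n. nu k (TT n y) \<le> real m}" for m :: nat
  have Acl: "closedin T (A m)" for m
    unfolding closed_nu
  proof (intro conjI ballI impI)
    show "A m \<subseteq> X" by (auto simp: A_def)
    fix y assume y: "y \<in> X" and close: "\<forall>K e. e > 0 \<longrightarrow> (\<exists>z\<in>A m. nu K (z - y) < e)"
    have "nu k (TT n y) \<le> real m" for n
    proof -
      obtain K C where C: "C \<ge> 0" "\<And>x. x \<in> X \<Longrightarrow> nu k (TT n x) \<le> C * nu K x" using TT_bound[of k n] by blast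
      show ?thesis
      proof (rule field_le_epsilon)
        fix e :: real assume e: "e > 0"
        have e': "e / (C + 1) > 0" using e C by simp
        obtain z where z: "z \<in> A m" "nu K (z - y) < e / (C + 1)" using close e' by blast
        have zX: "z \<in> X" using z by (simp add: A_def)
        have "TT n y = TT n z + TT n (y - z)" by (simp add: TT_diff)
        then have "nu k (TT n y) \<le> nu k (TT n z) + nu k (TT n (y - z))"
          using nu_tri[OF TT_X TT_X] by metis
        also have "nu k (TT n z) \<le> real m" using z by (simp add: A_def)
        also have "nu k (TT n (y - z)) \<le> C * nu K (y - z)" using C(2) Xdiff[OF y zX] by blast
        also have "nu K (y - z) = nu K (z - y)" by (rule nu_sym[OF y zX])
        also have "C * nu K (z - y) \<le> C * (e / (C + 1))" using z(2) C by (intro mult_left_mono) auto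
        also have "C * (e / (C + 1)) \<le> e" using C e by (simp add: field_simps)
        finally show "nu k (TT n y) \<le> real m + e" by simp
      qed
    qed
    then show "y \<in> A m" using y by (simp add: A_def)
  qed
  have cover: "Yc \<subseteq> (\<Union>m. A m)"
  proof
    fix y assume y: "y \<in> Yc"
    obtain B where B: "\<And>n. nu k (TT n y) \<le> B" using bdd[OF y] by blast
    obtain m :: nat where "real m \<ge> B" using real_arch_simple by blast
    then have "\<forall>n. nu k (TT n y) \<le> real m" using B by (meson order_trans)
    then have "y \<in> A m" using y Y_X by (auto simp: A_def)
    then show "y \<in> (\<Union>m. A m)" by blast
  qed
  obtain m y0 K r where r: "r > 0" and y0: "y0 \<in> Yc" and ball: "\<And>y. y \<in> Yc \<Longrightarrow> nu K (y - y0) < r \<Longrightarrow> y \<in> A m"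
    using baire[OF Y_closed Y0 Acl cover] by blast
  have y0X: "y0 \<in> X" using y0 Y_X by blast
  have small: "nu k (TT n w) \<le> 2 * real m" if w: "w \<in> Yc" "nu K w < r" for w n
  proof -
    have wX: "w \<in> X" using w Y_X by blast
    have "y0 + w \<in> A m" using ball[OF Y_add[OF y0 w(1)]] w(2) by simp
    then have a1: "nu k (TT n (y0 + w)) \<le> real m" by (simp add: A_def)
    have "y0 \<in> A m" using ball[OF y0] r by simp
    then have a2: "nu k (TT n y0) \<le> real m" by (simp add: A_def)
    have "TT n w = TT n (y0 + w) - TT n y0" by (simp add: TT_add)
    then have "nu k (TT n w) \<le> nu k (TT n (y0 + w)) + nu k (TT n y0)"
      using nu_tri_diff2[OF TT_X TT_X] by metis
    then show ?thesis using a1 a2 by simp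
  qed
  have "nu k (TT n w) \<le> (2 * (2 * real m) / r) * nu K w" if w: "w \<in> Yc" for w n
  proof (rule scal_bound)
    have wX: "w \<in> X" using w Y_X by blast
    show "nu K w \<ge> 0" by (rule nu_nonneg[OF wX])
    show "r > 0" by (rule r)
    show "2 * real m \<ge> 0" by simp
    fix t :: real assume t: "t > 0" "t * nu K w < r"
    have "nu K (seq_scale (complex_of_real t) w) = t * nu K w" using nu_scale[OF wX] t by simp
    then have "nu k (TT n (seq_scale (complex_of_real t) w)) \<le> 2 * real m"
      using small[OF Y_scale[OF w]] t by simp
    moreover have "nu k (TT n (seq_scale (complex_of_real t) w)) = t * nu k (TT n w)"
      using nu_scale[OF TT_X] t by (simp add: TT_scale)
    ultimately show "t * nu k (TT n w) \<le> 2 * real m" by simp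
  qed
  moreover have "2 * (2 * real m) / r \<ge> 0" using r by simp
  ultimately show ?thesis by blast
qed

lemma dense_DS:
  assumes YB: "Yc \<subseteq> DB p q X T"
  shows "Yc \<subseteq> DS p q X T"
proof
  fix y assume y: "y \<in> Yc"
  have yX: "y \<in> X" using y Y_X by blast
  have "eventually (\<lambda>n. nu k (TT n y - y) < e) sequentially" if e: "e > 0" for k e
  proof -
    obtain K L where L: "L \<ge> 0" "\<And>w n. w \<in> Yc \<Longrightarrow> nu k (TT n w) \<le> L * nu K w"
      using equicont[OF YB, of k] by blast
    define K' where "K' = max K k"
    define d where "d = e / (3 * (L + 1))"
    have d: "d > 0" using e L by (simp add: d_def)
    obtain z where z: "z \<in> phi" "nu K' (z - y) < d" using y d unfolding Y_mem by blast
    have zX: "z \<in> X" using z phiX by blast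
    have zY: "z \<in> Yc" using z phi_Y by blast
    have yzY: "y - z \<in> Yc" by (rule Y_diff[OF y zY])
    have n1: "nu K (z - y) < d" using nu_mono[of K K' "z - y"] Xdiff[OF zX yX] z(2) by (simp add: K'_def)
    have n2: "nu k (z - y) < d" using nu_mono[of k K' "z - y"] Xdiff[OF zX yX] z(2) by (simp add: K'_def)
    have Ld: "L * d \<le> e / 3" using L e by (simp add: d_def field_simps)
    have d3: "d \<le> e / 3" using L e by (simp add: d_def field_simps)
    have "z \<in> DS p q X T" using z phi_DS by blast
    then have "limitin T (\<lambda>n. TT n z) z sequentially" by (simp add: DS_def)
    then have lz: "\<forall>k e. e > 0 \<longrightarrow> eventually (\<lambda>n. nu k (TT n z - z) < e) sequentially"
      using limit_nu[of "\<lambda>n. TT n z" z] TT_X zX by blast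
    have e3: "e / 3 > 0" using e by simp
    have "eventually (\<lambda>n. nu k (TT n z - z) < e / 3) sequentially" using lz e3 by blast
    then show ?thesis
    proof eventually_elim
      case (elim n)
      have eq: "TT n y - y = TT n (y - z) + ((TT n z - z) + (z - y))" by (simp add: TT_diff)
      have t1: "nu k (TT n y - y) \<le> nu k (TT n (y - z)) + nu k ((TT n z - z) + (z - y))"
        unfolding eq by (rule nu_tri[OF TT_X Xadd[OF Xdiff[OF TT_X zX] Xdiff[OF zX yX]]])
      have t2: "nu k ((TT n z - z) + (z - y)) \<le> nu k (TT n z - z) + nu k (z - y)"
        by (rule nu_tri[OF Xdiff[OF TT_X zX] Xdiff[OF zX yX]])
      have t3: "nu k (TT n (y - z)) \<le> L * nu K (y - z)" by (rule L(2)[OF yzY])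
      have t4: "nu K (y - z) = nu K (z - y)" by (rule nu_sym[OF yX zX])
      have t5: "L * nu K (z - y) \<le> L * d" using n1 L(1) by (intro mult_left_mono) auto
      have t6: "nu k (TT n (y - z)) \<le> L * nu K (z - y)" using t3 unfolding t4 .
      show ?case using t1 t2 t5 t6 elim n2 Ld d3 by linarith
    qed
  qed
  then have "limitin T (\<lambda>n. TT n y) y sequentially" using limit_nu[of "\<lambda>n. TT n y" y] TT_X yX by blast
  then show "y \<in> DS p q X T" using yX by (simp add: DS_def)
qed

theorem main_equiv:
  shows "(closedin T (DW p q X T) \<longleftrightarrow> Yc \<subseteq> DB p q X T) \<and>
         (Yc \<subseteq> DB p q X T \<longleftrightarrow> Yc \<subseteq> DF p q X T) \<and>
         (Yc \<subseteq> DF p q X T \<longleftrightarrow> Yc = DW p q X T) \<and>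
         (Yc = DW p q X T \<longleftrightarrow> Yc = DS p q X T) \<and>
         (Yc = DS p q X T \<longleftrightarrow> closedin T (DS p q X T))"
proof -
  note chain = DS_DW DW_DF DF_DB DS_Y DW_Y phi_DS phi_Y
  have minW: "Yc \<subseteq> DW p q X T" if "closedin T (DW p q X T)"
    using closure_of_minimal[OF _ that, of phi] phi_DS DS_DW by blast
  have minS: "Yc \<subseteq> DS p q X T" if "closedin T (DS p q X T)"
    using closure_of_minimal[OF _ that, of phi] phi_DS by blast
  have B2S: "Yc \<subseteq> DS p q X T" if "Yc \<subseteq> DB p q X T" using dense_DS[OF that] .
  show ?thesis
  proof (intro conjI iffI)
    assume "closedin T (DW p q X T)" then show "Yc \<subseteq> DB p q X T" using minW DW_DF DF_DB by blast
  next
    assume "Yc \<subseteq> DB p q X T"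
    then have "Yc = DW p q X T" using B2S DS_DW DW_Y by blast
    then show "closedin T (DW p q X T)" using Y_closed by simp
  next
    assume "Yc \<subseteq> DB p q X T" then show "Yc \<subseteq> DF p q X T" using B2S DS_DW DW_DF by blast
  next
    assume "Yc \<subseteq> DF p q X T" then show "Yc \<subseteq> DB p q X T" using DF_DB by blast
  next
    assume "Yc \<subseteq> DF p q X T" then show "Yc = DW p q X T" using B2S DF_DB DS_DW DW_Y by blast
  next
    assume "Yc = DW p q X T" then show "Yc \<subseteq> DF p q X T" using DW_DF by blast
  next
    assume "Yc = DW p q X T" then show "Yc = DS p q X T" using B2S DW_DF DF_DB DS_Y by blast
  next
    assume "Yc = DS p q X T" then show "Yc = DW p q X T" using DS_DW DW_Y by blast
  next
    assume "Yc = DS p q X T" then show "closedin T (DS p q X T)" using Y_closed by simp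
  next
    assume "closedin T (DS p q X T)" then show "Yc = DS p q X T" using minS DS_Y by blast
  qed
qed

end

theorem mainTheorem16:
  fixes X :: "cseq set" and T :: "cseq topology" and p q :: "nat \<Rightarrow> nat"
  assumes fk: "fk_space X T"
    and phiX: "phi \<subseteq> X"
    and pq: "\<And>n. p n < q n"
    and qinf: "filterlim q at_top sequentially"
  shows "(closedin T (DW p q X T) \<longleftrightarrow> T closure_of phi \<subseteq> DB p q X T) \<and>
         (T closure_of phi \<subseteq> DB p q X T \<longleftrightarrow> T closure_of phi \<subseteq> DF p q X T) \<and>
         (T closure_of phi \<subseteq> DF p q X T \<longleftrightarrow> T closure_of phi = DW p q X T) \<and>
         (T closure_of phi = DW p q X T \<longleftrightarrow> T closure_of phi = DS p q X T) \<and>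
         (T closure_of phi = DS p q X T \<longleftrightarrow> closedin T (DS p q X T))"
proof -
  interpret fkpq X T p q
    by (unfold_locales) (use fk phiX pq qinf in auto)
  show ?thesis by (rule main_equiv)
qed

end
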